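(* Every Extended Bassian group is relatively Hopfian; that is, $\mathcal{EB}\subseteq\mathcal{RH}$.
   Context: All groups are abelian. A group $G$ is Bassian if there is no nonzero subgroup $H\le G$ with an injective homomorphism $G\to G/H$. A group $G$ is Extended Bassian ($G\in\mathcal{EB}$) if $G=B\oplus D$ where $B$ is Bassian and $D=\bigoplus_{p\ \text{prime}}\mathbb{Z}(p^\infty)^{(n_p)}$ with every $n_p$ finite ($\mathbb{Z}(p^\infty)$ the quasi-cyclic $p$-group, $A^{(n)}$ the direct sum of $n$ copies of $A$). A group $G$ is relatively Hopfian ($G\in\mathcal{RH}$) if $G$ is not isomorphic to a proper direct summand of any of its proper quotients, i.e., there is no nonzero subgroup $H\le G$ with $G/H=A\oplus C$, $C\neq0$ and $A\cong G$. *)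

theory Defs
  imports "HOL-Algebra.Algebra" "HOL-Computational_Algebra.Primes"
begin

text \<open>Abelian groups are written multiplicatively (HOL-Algebra convention).\<close>

definition Bassian :: "('a, 'b) monoid_scheme \<Rightarrow> bool" where
  "Bassian G \<longleftrightarrow> \<not> (\<exists>H. subgroup H G \<and> H \<noteq> {\<one>\<^bsub>G\<^esub>} \<and>
      (\<exists>f. f \<in> hom G (G Mod H) \<and> inj_on f (carrier G)))"

text \<open>The quasi-cyclic group Z(p^infinity), realised as the p-power-denominator
  rationals in [0,1) under addition modulo 1 (i.e. the p-part of Q/Z).\<close>

definition quasicyclic :: "nat \<Rightarrow> rat monoid" where
  "quasicyclic p = \<lparr>carrier = {q. 0 \<le> q \<and> q < 1 \<and> (\<exists>k. snd (quotient_of q) = int p ^ k)},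
                    monoid.mult = (\<lambda>a b. frac (a + b)), one = 0\<rparr>"

definition quasicyclic_sum :: "(nat \<Rightarrow> nat) \<Rightarrow> (nat \<times> nat \<Rightarrow> rat) monoid" where
  "quasicyclic_sum n = sum_group {(p, i). Factorial_Ring.prime (p::nat) \<and> i < n p} (\<lambda>(p, i). quasicyclic p)"

definition Extended_Bassian :: "('a, 'b) monoid_scheme \<Rightarrow> bool" where
  "Extended_Bassian G \<longleftrightarrow> (\<exists>B D. subgroup B G \<and> subgroup D G \<and>
      B <#>\<^bsub>G\<^esub> D = carrier G \<and> B \<inter> D = {\<one>\<^bsub>G\<^esub>} \<and>
      Bassian (G\<lparr>carrier := B\<rparr>) \<and>
      (\<exists>n :: nat \<Rightarrow> nat. G\<lparr>carrier := D\<rparr> \<cong> quasicyclic_sum n))"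

definition relatively_Hopfian :: "('a, 'b) monoid_scheme \<Rightarrow> bool" where
  "relatively_Hopfian G \<longleftrightarrow> \<not> (\<exists>H. subgroup H G \<and> H \<noteq> {\<one>\<^bsub>G\<^esub>} \<and>
      (\<exists>A C. subgroup A (G Mod H) \<and> subgroup C (G Mod H) \<and>
         A <#>\<^bsub>G Mod H\<^esub> C = carrier (G Mod H) \<and> A \<inter> C = {\<one>\<^bsub>G Mod H\<^esub>} \<and>
         C \<noteq> {\<one>\<^bsub>G Mod H\<^esub>} \<and> (G Mod H)\<lparr>carrier := A\<rparr> \<cong> G))"

end

theory Submission
  imports Defs
begin

lemma (in comm_group) bassian_rel:
  assumes B: "Bassian G"
    and R: "R \<subseteq> carrier G \<times> carrier G"
    and one: "(\<one>, \<one>) \<in> R"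
    and mul: "\<And>a b c d. (a,b) \<in> R \<Longrightarrow> (c,d) \<in> R \<Longrightarrow> (a \<otimes> c, b \<otimes> d) \<in> R"
    and inv: "\<And>a b. (a,b) \<in> R \<Longrightarrow> (inv a, inv b) \<in> R"
    and tot: "\<And>a. a \<in> carrier G \<Longrightarrow> \<exists>b. (a,b) \<in> R"
    and inj: "\<And>x k. (x,k) \<in> R \<Longrightarrow> (\<one>,k) \<in> R \<Longrightarrow> x = \<one>"
    and k: "(\<one>, k) \<in> R"
  shows "k = \<one>"
proof (rule ccontr)
  assume kne: "k \<noteq> \<one>"
  define K where "K = {k. (\<one>,k) \<in> R}"
  have Kc: "K \<subseteq> carrier G" using R by (auto simp: K_def)
  have sK: "subgroup K G"
  proof (rule subgroupI)
    show "K \<subseteq> carrier G" by fact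
    show "K \<noteq> {}" using one by (auto simp: K_def)
    fix a b assume a: "a \<in> K" and b: "b \<in> K"
    show "inv a \<in> K" using inv[of \<one> a] a by (auto simp: K_def)
    show "a \<otimes> b \<in> K" using mul[of \<one> a \<one> b] a b by (auto simp: K_def)
  qed
  then interpret N: normal K G using subgroup_imp_normal by blast
  have Rc: "(a,b) \<in> R \<Longrightarrow> a \<in> carrier G \<and> b \<in> carrier G" for a b using R by auto
  have same: "K #> x = K #> y" if "(a,x) \<in> R" "(a,y) \<in> R" for a x y
  proof -
    have "(a \<otimes> inv a, x \<otimes> inv y) \<in> R" using mul[OF that(1) inv[OF that(2)]] .
    then have "x \<otimes> inv y \<in> K" using Rc[OF that(1)] by (simp add: K_def)
    then have "x \<in> K #> y" using N.rcos_module Rc that by blast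
    then show ?thesis using repr_independence sK Rc that by metis
  qed
  define f where "f a = K #> (SOME b. (a,b) \<in> R)" for a
  have fS: "a \<in> carrier G \<Longrightarrow> (a, SOME b. (a,b) \<in> R) \<in> R" for a
    using tot by (meson someI_ex)
  have hom: "f \<in> hom G (G Mod K)"
  proof (rule homI)
    fix a assume a: "a \<in> carrier G"
    show "f a \<in> carrier (G Mod K)" using fS[OF a] Rc
      by (auto simp: f_def FactGroup_def RCOSETS_def)
  next
    fix a c assume a: "a \<in> carrier G" and c: "c \<in> carrier G"
    let ?b1 = "SOME b. (a,b) \<in> R" and ?b2 = "SOME b. (c,b) \<in> R"
    have "f (a \<otimes> c) = K #> (?b1 \<otimes> ?b2)"
      unfolding f_def using same[OF fS mul[OF fS[OF a] fS[OF c]]] a c by auto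
    also have "\<dots> = (K #> ?b1) <#> (K #> ?b2)" using N.rcos_sum Rc fS a c by metis
    finally show "f (a \<otimes> c) = f a \<otimes>\<^bsub>G Mod K\<^esub> f c" by (simp add: f_def FactGroup_def)
  qed
  have "inj_on f (carrier G)"
  proof (rule inj_onI)
    fix a c assume a: "a \<in> carrier G" and c: "c \<in> carrier G" and e: "f a = f c"
    let ?b1 = "SOME b. (a,b) \<in> R" and ?b2 = "SOME b. (c,b) \<in> R"
    have b1: "?b1 \<in> carrier G" and b2: "?b2 \<in> carrier G" using fS a c Rc by blast+
    have "?b1 \<in> K #> ?b2" using e unfolding f_def using rcos_self[OF b1 sK] by metis
    then have m: "?b1 \<otimes> inv ?b2 \<in> K" using N.rcos_module b1 b2 by blast
    have "(a \<otimes> inv c, ?b1 \<otimes> inv ?b2) \<in> R" using mul[OF fS[OF a] inv[OF fS[OF c]]] .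
    then have "a \<otimes> inv c = \<one>" using inj m by (auto simp: K_def)
    then have "inv (inv c) = a" using a c by (intro inv_equality) auto
    then show "a = c" using c by simp
  qed
  moreover have "K \<noteq> {\<one>}" using k kne by (auto simp: K_def)
  ultimately show False using B sK hom unfolding Bassian_def by blast
qed

lemma (in group) set_mult_mem: "x \<in> H <#> K \<longleftrightarrow> (\<exists>h\<in>H. \<exists>k\<in>K. x = h \<otimes> k)"
  by (auto simp: set_mult_def)

lemma (in comm_group) subgroup_set_mult:
  assumes "subgroup H G" "subgroup K G" shows "subgroup (H <#> K) G"
proof (rule subgroupI)
  have Hc: "H \<subseteq> carrier G" and Kc: "K \<subseteq> carrier G" using assms subgroup.subset by auto
  show "H <#> K \<subseteq> carrier G" using Hc Kc by (auto simp: set_mult_mem intro!: m_closed)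
  have "\<one> \<otimes> \<one> \<in> H <#> K" using subgroup.one_closed[OF assms(1)] subgroup.one_closed[OF assms(2)] by (force simp: set_mult_mem)
  then show "H <#> K \<noteq> {}" by blast
  fix a b assume a: "a \<in> H <#> K" and b: "b \<in> H <#> K"
  then obtain h k h' k' where hk: "h \<in> H" "k \<in> K" "a = h \<otimes> k" "h' \<in> H" "k' \<in> K" "b = h' \<otimes> k'"
    by (auto simp: set_mult_mem)
  have c: "h \<in> carrier G" "k \<in> carrier G" "h' \<in> carrier G" "k' \<in> carrier G" using hk Hc Kc by auto
  have "inv a = inv h \<otimes> inv k" using c hk by (simp add: inv_mult m_comm)
  then show "inv a \<in> H <#> K" using subgroup.m_inv_closed[OF assms(1) hk(1)] subgroup.m_inv_closed[OF assms(2) hk(2)] by (force simp: set_mult_mem)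
  have "a \<otimes> b = (h \<otimes> h') \<otimes> (k \<otimes> k')" using c hk by (simp add: m_ac)
  then show "a \<otimes> b \<in> H <#> K" using subgroup.m_closed[OF assms(1) hk(1) hk(4)] subgroup.m_closed[OF assms(2) hk(2) hk(5)] by (force simp: set_mult_mem)
qed

definition adj :: "('a,'b) monoid_scheme \<Rightarrow> 'a set \<Rightarrow> 'a \<Rightarrow> 'a set" where
  "adj G M x = {m \<otimes>\<^bsub>G\<^esub> x [^]\<^bsub>G\<^esub> (j::int) | m j. m \<in> M}"

lemma (in comm_group) adj_subgroup:
  assumes M: "subgroup M G" and x: "x \<in> carrier G"
  shows "subgroup (adj G M x) G" "M \<subseteq> adj G M x" "x \<in> adj G M x"
proof -
  have Mc: "M \<subseteq> carrier G" using M subgroup.subset by auto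
  show "subgroup (adj G M x) G"
  proof (rule subgroupI)
    show "adj G M x \<subseteq> carrier G" using Mc x by (auto simp: adj_def)
    show "adj G M x \<noteq> {}" using M by (auto simp: adj_def intro: subgroup.one_closed)
    fix a b assume a: "a \<in> adj G M x" and b: "b \<in> adj G M x"
    then obtain m j m' j' where e: "m \<in> M" "a = m \<otimes> x [^] (j::int)" "m' \<in> M" "b = m' \<otimes> x [^] (j'::int)"
      by (auto simp: adj_def)
    have c: "m \<in> carrier G" "m' \<in> carrier G" using e Mc by auto
    have "inv a = inv m \<otimes> x [^] (-j)" using e c x by (simp add: inv_mult m_comm int_pow_neg)
    then show "inv a \<in> adj G M x" using e M by (auto simp: adj_def subgroup.m_inv_closed)
    have "a \<otimes> b = (m \<otimes> m') \<otimes> x [^] (j + j')" using e c x by (simp add: int_pow_mult m_ac)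
    then show "a \<otimes> b \<in> adj G M x" using e M by (auto simp: adj_def subgroup.m_closed)
  qed
  show "M \<subseteq> adj G M x" unfolding adj_def
  proof
    fix m assume "m \<in> M" then show "m \<in> {m \<otimes> x [^] (j::int) | m j. m \<in> M}"
      using Mc by (auto intro!: exI[of _ m] exI[of _ "0::int"])
  qed
  show "x \<in> adj G M x" unfolding adj_def using M x
    by (auto intro!: exI[of _ \<one>] exI[of _ "1::int"] subgroup.one_closed)
qed

lemma (in comm_group) divisible_complement:
  assumes sP: "subgroup P G" and dv: "\<And>x n. x \<in> P \<Longrightarrow> (n::nat) > 0 \<Longrightarrow> \<exists>y\<in>P. y [^] n = x"
  shows "\<exists>M. subgroup M G \<and> P \<inter> M = {\<one>} \<and> P <#> M = carrier G"
proof -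
  have Pc: "P \<subseteq> carrier G" using sP subgroup.subset by auto
  define Ach where "Ach = {M. subgroup M G \<and> P \<inter> M = {\<one>}}"
  have "\<exists>M\<in>Ach. \<forall>Z\<in>Ach. M \<subseteq> Z \<longrightarrow> Z = M"
  proof (rule Zorn_Lemma2, intro ballI)
    fix C assume C: "C \<in> chains Ach"
    show "\<exists>U\<in>Ach. \<forall>Z\<in>C. Z \<subseteq> U"
    proof (cases "C = {}")
      case True
      have "{\<one>} \<in> Ach" using sP by (auto simp: Ach_def triv_subgroup subgroup.one_closed)
      then show ?thesis using True by blast
    next
      case False
      have CA: "C \<subseteq> Ach" and ch: "\<And>Z Y. Z \<in> C \<Longrightarrow> Y \<in> C \<Longrightarrow> Z \<subseteq> Y \<or> Y \<subseteq> Z"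
        using C by (auto simp: chains_def chain_subset_def)
      have "subgroup (\<Union>C) G"
      proof (rule subgroupI)
        show "\<Union>C \<subseteq> carrier G" using CA by (auto simp: Ach_def dest: subgroup.subset)
        show "\<Union>C \<noteq> {}" using False CA by (auto simp: Ach_def dest: subgroup.one_closed)
        fix a b assume a: "a \<in> \<Union>C" and b: "b \<in> \<Union>C"
        then obtain Z Y where Z: "Z \<in> C" "a \<in> Z" and Y: "Y \<in> C" "b \<in> Y" by auto
        show "inv a \<in> \<Union>C" using Z CA by (auto simp: Ach_def intro: subgroup.m_inv_closed)
        from ch[OF Z(1) Y(1)] show "a \<otimes> b \<in> \<Union>C"
        proof
          assume "Z \<subseteq> Y" then show ?thesis using Z Y CA by (auto simp: Ach_def intro!: subgroup.m_closed)
        next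
          assume "Y \<subseteq> Z" then show ?thesis using Z Y CA by (auto simp: Ach_def intro!: subgroup.m_closed)
        qed
      qed
      moreover have "P \<inter> \<Union>C = {\<one>}" using CA False sP by (auto simp: Ach_def subgroup.one_closed)
      ultimately show ?thesis by (auto simp: Ach_def)
    qed
  qed
  then obtain M where MA: "M \<in> Ach" and max: "\<And>Z. Z \<in> Ach \<Longrightarrow> M \<subseteq> Z \<Longrightarrow> Z = M" by blast
  have sM: "subgroup M G" and PM: "P \<inter> M = {\<one>}" using MA by (auto simp: Ach_def)
  have Mc: "M \<subseteq> carrier G" using sM subgroup.subset by auto
  have sPM: "subgroup (P <#> M) G" using subgroup_set_mult sP sM by blast
  have key: "x \<in> M" if x: "x \<in> carrier G" and dis: "P \<inter> adj G M x = {\<one>}" for x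
  proof -
    have "adj G M x = M" using max adj_subgroup[OF sM x] dis by (auto simp: Ach_def)
    then show ?thesis using adj_subgroup(3)[OF sM x] by simp
  qed
  have PMmem: "p \<otimes> m \<in> P <#> M" if "p \<in> P" "m \<in> M" for p m using that by (auto simp: set_mult_mem)
  have "carrier G \<subseteq> P <#> M"
  proof
    fix g assume g: "g \<in> carrier G"
    show "g \<in> P <#> M"
    proof (rule ccontr)
      assume gn: "g \<notin> P <#> M"
      show False
      proof (cases "\<exists>k>0. g [^] (k::nat) \<in> P <#> M")
        case False
        have "P \<inter> adj G M g = {\<one>}"
        proof
          show "{\<one>} \<subseteq> P \<inter> adj G M g" using sP adj_subgroup[OF sM g] by (auto intro: subgroup.one_closed)
          show "P \<inter> adj G M g \<subseteq> {\<one>}"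
          proof
            fix z assume z: "z \<in> P \<inter> adj G M g"
            then obtain m j where mj: "m \<in> M" "z = m \<otimes> g [^] (j::int)" "z \<in> P" by (auto simp: adj_def)
            have mc: "m \<in> carrier G" using mj Mc by auto
            have gj: "g [^] j = inv m \<otimes> z" using mj mc g by (simp add: m_assoc[symmetric])
            have "inv m \<otimes> z = z \<otimes> inv m" using mc mj Pc by (intro m_comm) auto
            then have gjPM: "g [^] j \<in> P <#> M"
              using PMmem[OF mj(3) subgroup.m_inv_closed[OF sM mj(1)]] gj by simp
            show "z \<in> {\<one>}"
            proof (cases "j = 0")
              case True then have "z = m" using mj mc by simp
              then show ?thesis using mj PM by auto
            next
              case jn: False
              show ?thesis
              proof (cases "j > 0")
                case True
                have "g [^] (nat j) \<in> P <#> M" using gjPM True by (metis int_pow_int int_nat_eq less_le)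
                moreover have "nat j > 0" using True by simp
                ultimately show ?thesis using False by blast
              next
                case jl: False
                have "g [^] (-j) \<in> P <#> M" using gjPM g sPM by (simp add: int_pow_neg subgroup.m_inv_closed)
                then have "g [^] (nat (-j)) \<in> P <#> M" using jl by (metis int_pow_int int_nat_eq less_le not_less neg_0_le_iff_le)
                moreover have "nat (-j) > 0" using jl jn by simp
                ultimately show ?thesis using False by blast
              qed
            qed
          qed
        qed
        then show False using key[OF g] gn PMmem[OF subgroup.one_closed[OF sP]] g by (metis l_one)
      next
        case True
        define k where "k = (LEAST k. k > 0 \<and> g [^] (k::nat) \<in> P <#> M)"
        have k: "k > 0" "g [^] k \<in> P <#> M" using LeastI_ex[OF True] by (auto simp: k_def)
        have kmin: "\<And>k'. 0 < k' \<Longrightarrow> k' < k \<Longrightarrow> g [^] k' \<notin> P <#> M"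
          using not_less_Least k_def by blast
        have "k \<noteq> 1" using k gn g by auto
        then obtain p where p: "Factorial_Ring.prime p" "p dvd k" using prime_factor_nat by blast
        define g1 where "g1 = g [^] (k div p)"
        have p1: "p > 1" using p prime_gt_1_nat by blast
        have kdp: "0 < k div p" "k div p < k" using p k p1
          by (auto simp: dvd_div_eq_0_iff)
        have g1n: "g1 \<notin> P <#> M" using kmin[OF kdp] by (simp add: g1_def)
        have g1c: "g1 \<in> carrier G" using g by (simp add: g1_def)
        have "g1 [^] p = g [^] k" using p g by (simp add: g1_def nat_pow_pow)
        then obtain q m where qm: "q \<in> P" "m \<in> M" "g1 [^] p = q \<otimes> m" using k by (auto simp: set_mult_mem)
        obtain y where y: "y \<in> P" "y [^] p = q" using dv[OF qm(1), of p] p1 by auto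
        have yc: "y \<in> carrier G" using y Pc by auto
        define g2 where "g2 = g1 \<otimes> inv y"
        have g2c: "g2 \<in> carrier G" using g1c yc by (simp add: g2_def)
        have g2n: "g2 \<notin> P <#> M"
        proof
          assume "g2 \<in> P <#> M"
          then obtain a b where ab: "a \<in> P" "b \<in> M" "g2 = a \<otimes> b" by (auto simp: set_mult_mem)
          have ac: "a \<in> carrier G" "b \<in> carrier G" using ab Pc Mc by auto
          have "g1 = g2 \<otimes> y" using g1c yc by (simp add: g2_def m_assoc)
          also have "\<dots> = (y \<otimes> a) \<otimes> b" using ab(3) ac yc by (simp add: m_ac)
          finally have "g1 = (y \<otimes> a) \<otimes> b" .
          then show False using g1n PMmem ab y sP by (metis subgroup.m_closed)
        qed
        have qc: "q \<in> carrier G" "m \<in> carrier G" using qm Pc Mc by auto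
        have "g2 [^] p = g1 [^] p \<otimes> inv (y [^] p)"
          using g1c yc by (simp add: g2_def nat_pow_distrib nat_pow_inv)
        also have "\<dots> = (q \<otimes> m) \<otimes> inv q" using qm y by simp
        also have "\<dots> = m" using qc by (simp add: m_ac)
        finally have g2p: "g2 [^] p = m" .
        have "P \<inter> adj G M g2 = {\<one>}"
        proof
          show "{\<one>} \<subseteq> P \<inter> adj G M g2" using sP adj_subgroup[OF sM g2c] by (auto intro: subgroup.one_closed)
          show "P \<inter> adj G M g2 \<subseteq> {\<one>}"
          proof
            fix z assume z: "z \<in> P \<inter> adj G M g2"
            then obtain m' j where mj: "m' \<in> M" "z = m' \<otimes> g2 [^] (j::int)" "z \<in> P" by (auto simp: adj_def)
            have mc: "m' \<in> carrier G" using mj Mc by auto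
            define t where "t = j div int p"
            define r where "r = j mod int p"
            have jtr: "j = int p * t + r" by (simp add: t_def r_def)
            have r: "0 \<le> r" "r < int p" using p1 by (auto simp: r_def)
            have "g2 [^] j = (g2 [^] (int p)) [^] t \<otimes> g2 [^] r"
              using g2c jtr by (simp add: int_pow_mult int_pow_pow)
            also have "\<dots> = m [^] t \<otimes> g2 [^] r" using g2p by (simp add: int_pow_int)
            finally have e: "z = (m' \<otimes> m [^] t) \<otimes> g2 [^] r" using mj mc qc g2c by (simp add: m_assoc)
            have mt: "m' \<otimes> m [^] t \<in> M" using sM mj qm subgroup_int_pow_closed by (blast intro: subgroup.m_closed)
            show "z \<in> {\<one>}"
            proof (cases "r = 0")
              case True
              then have "z \<in> M" using e mt Mc by auto
              then show ?thesis using mj PM by auto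
            next
              case False
              have mtc: "m' \<otimes> m [^] t \<in> carrier G" using mt Mc by auto
              have "g2 [^] r = inv (m' \<otimes> m [^] t) \<otimes> z" using e mtc g2c by (simp add: m_assoc[symmetric])
              also have "\<dots> = z \<otimes> inv (m' \<otimes> m [^] t)" using mtc mj(3) Pc by (intro m_comm) auto
              finally have rPM: "g2 [^] r \<in> P <#> M" using PMmem mj(3) subgroup.m_inv_closed[OF sM mt] by simp
              have "\<one> \<otimes> m \<in> P <#> M" using PMmem[OF subgroup.one_closed[OF sP] qm(2)] .
              then have pPM: "g2 [^] (int p) \<in> P <#> M" using g2p qc
                by (simp add: int_pow_int)
              have cop: "gcd r (int p) = 1"
              proof -
                have "\<not> int p dvd r" using r False by (auto dest: zdvd_imp_le)
                moreover have "Factorial_Ring.prime (int p)" using p(1) by simp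
                ultimately have "coprime (int p) r" using prime_imp_coprime by blast
                then show ?thesis by (simp add: coprime_commute coprime_iff_gcd_eq_1)
              qed
              obtain u v where uv: "u * r + v * int p = 1" using bezout_int[of r "int p"] cop by (metis mult.commute)
              have "g2 = (g2 [^] r) [^] u \<otimes> (g2 [^] (int p)) [^] v"
                using g2c uv by (simp add: int_pow_pow int_pow_mult[symmetric] mult.commute flip: int_pow_1)
              moreover have "\<dots> \<in> P <#> M" using sPM rPM pPM subgroup_int_pow_closed subgroup.m_closed by metis
              ultimately show ?thesis using g2n by simp
            qed
          qed
        qed
        then show False using key[OF g2c] g2n PMmem[OF subgroup.one_closed[OF sP]] g2c by (metis l_one)
      qed
    qed
  qed
  moreover have "P <#> M \<subseteq> carrier G" using sPM subgroup.subset by blast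
  ultimately show ?thesis using sM PM by blast
qed

lemma (in comm_group) canc3:
  "x \<in> carrier G \<Longrightarrow> y \<in> carrier G \<Longrightarrow> z \<in> carrier G \<Longrightarrow> x \<otimes> (y \<otimes> (inv x \<otimes> z)) = y \<otimes> z"
proof -
  assume c: "x \<in> carrier G" "y \<in> carrier G" "z \<in> carrier G"
  have "x \<otimes> (y \<otimes> (inv x \<otimes> z)) = y \<otimes> (x \<otimes> (inv x \<otimes> z))" using c by (intro m_lcomm) auto
  also have "x \<otimes> (inv x \<otimes> z) = z" using c by (simp add: m_assoc[symmetric])
  finally show ?thesis .
qed

lemma (in comm_group) dec_unique:
  assumes "subgroup P G" "subgroup M G" "P \<inter> M = {\<one>}"
    and "a \<in> P" "b \<in> M" "a' \<in> P" "b' \<in> M" "a \<otimes> b = a' \<otimes> b'"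
  shows "a = a' \<and> b = b'"
proof -
  have c: "a \<in> carrier G" "b \<in> carrier G" "a' \<in> carrier G" "b' \<in> carrier G"
    using assms subgroup.mem_carrier by metis+
  have "a \<otimes> inv a' = b' \<otimes> inv b"
  proof -
    have "a \<otimes> inv a' = (a \<otimes> b) \<otimes> inv (a' \<otimes> b) " using c by (simp add: inv_mult m_ac)
    also have "\<dots> = (a' \<otimes> b') \<otimes> inv (a' \<otimes> b)" using assms(8) by simp
    also have "\<dots> = b' \<otimes> inv b" using c by (simp add: inv_mult m_ac canc3)
    finally show ?thesis .
  qed
  moreover have "a \<otimes> inv a' \<in> P" using assms by (simp add: subgroup.m_closed subgroup.m_inv_closed)
  moreover have "b' \<otimes> inv b \<in> M" using assms by (simp add: subgroup.m_closed subgroup.m_inv_closed)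
  ultimately have "a \<otimes> inv a' = \<one>" "b' \<otimes> inv b = \<one>" using assms(3) by auto
  then have "inv (inv a') = a" "inv (inv b) = b'" using c by (intro inv_equality; simp)+
  then show ?thesis using c by simp
qed

lemma (in group) prime_order_elem:
  assumes x: "x \<in> carrier G" "x \<noteq> \<one>" and n: "n > 0" "x [^] (n::nat) = \<one>"
  shows "\<exists>(p::nat) k. Factorial_Ring.prime p \<and> x [^] (k::nat) \<noteq> \<one> \<and> (x [^] k) [^] p = \<one>"
proof -
  have ex: "\<exists>n>0. x [^] (n::nat) = \<one>" using n by blast
  define n0 where "n0 = (LEAST n. n > 0 \<and> x [^] (n::nat) = \<one>)"
  have n0: "n0 > 0" "x [^] n0 = \<one>" using LeastI_ex[OF ex] by (auto simp: n0_def)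
  have min: "\<And>k. 0 < k \<Longrightarrow> k < n0 \<Longrightarrow> x [^] k \<noteq> \<one>" using not_less_Least n0_def by blast
  have "n0 \<noteq> 1" using n0 x by auto
  then obtain p where p: "Factorial_Ring.prime p" "p dvd n0" using prime_factor_nat by blast
  have p1: "p > 1" using p prime_gt_1_nat by blast
  have "0 < n0 div p" "n0 div p < n0" using p n0 p1 by (auto simp: dvd_div_eq_0_iff)
  then have "x [^] (n0 div p) \<noteq> \<one>" using min by blast
  moreover have "(x [^] (n0 div p)) [^] p = \<one>" using p n0 x by (simp add: nat_pow_pow)
  ultimately show ?thesis using p by blast
qed

lemma (in comm_group) bassian_no_div_torsion:
  assumes B: "Bassian G" and sP: "subgroup P G"
    and dv: "\<And>x n. x \<in> P \<Longrightarrow> (n::nat) > 0 \<Longrightarrow> \<exists>y\<in>P. y [^] n = x"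
    and tor: "\<And>x. x \<in> P \<Longrightarrow> \<exists>n>0. x [^] (n::nat) = \<one>"
    and x: "x \<in> P"
  shows "x = \<one>"
proof (rule ccontr)
  assume xn: "x \<noteq> \<one>"
  have Pc: "P \<subseteq> carrier G" using sP subgroup.subset by auto
  obtain n where n: "n > 0" "x [^] (n::nat) = \<one>" using tor x by blast
  obtain p k where pk: "Factorial_Ring.prime (p::nat)" "x [^] (k::nat) \<noteq> \<one>" "(x [^] k) [^] p = \<one>"
    using prime_order_elem[OF _ xn n] x Pc by blast
  define z where "z = x [^] k"
  have zP: "z \<in> P" using x sP by (simp add: z_def subgroup_int_pow_closed int_pow_int[symmetric])
  have p1: "p > 0" using pk prime_gt_0_nat by blast
  obtain M where sM: "subgroup M G" and PM: "P \<inter> M = {\<one>}" and PMc: "P <#> M = carrier G"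
    using divisible_complement[OF sP dv] by blast
  have Mc: "M \<subseteq> carrier G" using sM subgroup.subset by auto
  define R where "R = {(q \<otimes> m, y \<otimes> m) | q m y. q \<in> P \<and> m \<in> M \<and> y \<in> P \<and> y [^] p = q}"
  have "z = \<one>"
  proof (rule bassian_rel[OF B, of R])
    show "R \<subseteq> carrier G \<times> carrier G" using Pc Mc by (auto simp: R_def)
    have o: "\<one> \<in> P" "\<one> \<in> M" "\<one> [^] p = \<one>" using sP sM by (auto intro: subgroup.one_closed)
    have "(\<one> \<otimes> \<one>, \<one> \<otimes> \<one>) \<in> R" unfolding R_def using o by blast
    then show "(\<one>, \<one>) \<in> R" by simp
    have "z [^] p = \<one>" using pk by (simp add: z_def)
    then have "(\<one> \<otimes> \<one>, z \<otimes> \<one>) \<in> R" unfolding R_def using o zP by blast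
    then show "(\<one>, z) \<in> R" using zP Pc by auto
  next
    fix a b c d assume "(a,b) \<in> R" "(c,d) \<in> R"
    then obtain q m y q' m' y' where e: "q \<in> P" "m \<in> M" "y \<in> P" "y [^] p = q" "a = q \<otimes> m" "b = y \<otimes> m"
      "q' \<in> P" "m' \<in> M" "y' \<in> P" "y' [^] p = q'" "c = q' \<otimes> m'" "d = y' \<otimes> m'" by (auto simp: R_def)
    have cc: "q \<in> carrier G" "m \<in> carrier G" "y \<in> carrier G" "q' \<in> carrier G" "m' \<in> carrier G" "y' \<in> carrier G"
      using e Pc Mc by auto
    have "a \<otimes> c = (q \<otimes> q') \<otimes> (m \<otimes> m')" "b \<otimes> d = (y \<otimes> y') \<otimes> (m \<otimes> m')"
      using e cc by (simp_all add: m_ac)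
    moreover have "(y \<otimes> y') [^] p = q \<otimes> q'" using e cc by (simp add: nat_pow_distrib)
    ultimately show "(a \<otimes> c, b \<otimes> d) \<in> R" unfolding R_def using e sP sM
      by (blast intro: subgroup.m_closed)
  next
    fix a b assume "(a,b) \<in> R"
    then obtain q m y where e: "q \<in> P" "m \<in> M" "y \<in> P" "y [^] p = q" "a = q \<otimes> m" "b = y \<otimes> m"
      by (auto simp: R_def)
    have cc: "q \<in> carrier G" "m \<in> carrier G" "y \<in> carrier G" using e Pc Mc by auto
    have "inv a = inv q \<otimes> inv m" "inv b = inv y \<otimes> inv m" using e cc by (simp_all add: inv_mult m_comm)
    moreover have "(inv y) [^] p = inv q" using e cc by (simp add: nat_pow_inv)
    ultimately show "(inv a, inv b) \<in> R" unfolding R_def using e sP sM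
      by (blast intro: subgroup.m_inv_closed)
  next
    fix a assume "a \<in> carrier G"
    then have "a \<in> P <#> M" using PMc by simp
    then obtain q m where e: "q \<in> P" "m \<in> M" "a = q \<otimes> m" unfolding set_mult_mem by blast
    obtain y where "y \<in> P" "y [^] p = q" using dv[OF e(1) p1] by blast
    then show "\<exists>b. (a,b) \<in> R" unfolding R_def using e by blast
  next
    fix a k assume "(a,k) \<in> R" "(\<one>,k) \<in> R"
    then obtain q m y q' m' y' where e: "q \<in> P" "m \<in> M" "y \<in> P" "y [^] p = q" "a = q \<otimes> m" "k = y \<otimes> m"
      "q' \<in> P" "m' \<in> M" "y' \<in> P" "y' [^] p = q'" "\<one> = q' \<otimes> m'" "k = y' \<otimes> m'" by (auto simp: R_def)
    have "q' \<otimes> m' = \<one> \<otimes> \<one>" by (simp add: e(11)[symmetric])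
    then have "q' = \<one> \<and> m' = \<one>" using dec_unique[OF sP sM PM e(7) e(8) subgroup.one_closed[OF sP] subgroup.one_closed[OF sM]] by blast
    then have q1: "q' = \<one>" "m' = \<one>" by auto
    have "y \<otimes> m = y' \<otimes> \<one>" using e(6) e(12) q1 by simp
    then have yy: "y = y'" "m = \<one>" using dec_unique[OF sP sM PM e(3) e(2) e(9) subgroup.one_closed[OF sM]] by auto
    have "q = \<one>" using e(4) e(10) q1(1) yy(1) by simp
    then show "a = \<one>" using e(5) yy(2) by simp
  qed
  then show False using pk by (simp add: z_def)
qed

lemma card_le_fibers:
  assumes "finite W" "\<And>y. y \<in> k ` W \<Longrightarrow> card {x\<in>W. k x = y} \<le> c"
  shows "card W \<le> card (k ` W) * c"
proof -
  have "W = (\<Union>y\<in>k ` W. {x\<in>W. k x = y})" by auto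
  moreover have "card (\<Union>y\<in>k ` W. {x\<in>W. k x = y}) \<le> (\<Sum>y\<in>k ` W. card {x\<in>W. k x = y})"
    by (rule card_UN_le) (use assms(1) in auto)
  ultimately have "card W \<le> (\<Sum>y\<in>k ` W. card {x\<in>W. k x = y})" by simp
  also have "\<dots> \<le> (\<Sum>y\<in>k ` W. c)" using assms(2) by (intro sum_mono) auto
  also have "\<dots> = card (k ` W) * c" by simp
  finally show ?thesis .
qed

lemma hom_fiber_card:
  assumes G: "group G" and E: "group E" and F: "subgroup F G" "finite F"
    and kc: "\<And>x. x \<in> F \<Longrightarrow> k x \<in> carrier E"
    and km: "\<And>x y. x \<in> F \<Longrightarrow> y \<in> F \<Longrightarrow> k (x \<otimes>\<^bsub>G\<^esub> y) = k x \<otimes>\<^bsub>E\<^esub> k y"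
  shows "\<And>y. y \<in> k ` F \<Longrightarrow> card {x\<in>F. k x = y} = card {x\<in>F. k x = \<one>\<^bsub>E\<^esub>}"
proof -
  interpret G: group G by fact
  interpret E: group E by fact
  let ?N = "{x\<in>F. k x = \<one>\<^bsub>E\<^esub>}"
  have Fc: "F \<subseteq> carrier G" using F subgroup.subset by blast
  fix y assume y: "y \<in> k ` F"
  show "card {x\<in>F. k x = y} = card ?N"
  proof -
    obtain x0 where x0: "x0 \<in> F" "y = k x0" using y by blast
    have x0c: "x0 \<in> carrier G" using x0 Fc by auto
    have "bij_betw (\<lambda>n. x0 \<otimes>\<^bsub>G\<^esub> n) ?N {x\<in>F. k x = y}"
    proof (rule bij_betw_imageI)
      show "inj_on (\<lambda>n. x0 \<otimes>\<^bsub>G\<^esub> n) ?N"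
      proof (rule inj_onI)
        fix a b assume "a \<in> ?N" "b \<in> ?N" "x0 \<otimes>\<^bsub>G\<^esub> a = x0 \<otimes>\<^bsub>G\<^esub> b"
        then show "a = b" using x0c Fc G.l_cancel by blast
      qed
      show "(\<lambda>n. x0 \<otimes>\<^bsub>G\<^esub> n) ` ?N = {x\<in>F. k x = y}"
      proof
        show "(\<lambda>n. x0 \<otimes>\<^bsub>G\<^esub> n) ` ?N \<subseteq> {x\<in>F. k x = y}"
          using x0 F km kc by (auto intro: subgroup.m_closed)
        show "{x\<in>F. k x = y} \<subseteq> (\<lambda>n. x0 \<otimes>\<^bsub>G\<^esub> n) ` ?N"
        proof
          fix x assume x: "x \<in> {x\<in>F. k x = y}"
          define n where "n = inv\<^bsub>G\<^esub> x0 \<otimes>\<^bsub>G\<^esub> x"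
          have nF: "n \<in> F" using F x x0 by (auto simp: n_def intro!: subgroup.m_closed subgroup.m_inv_closed)
          have xc: "x \<in> carrier G" using x Fc by auto
          have xe: "x0 \<otimes>\<^bsub>G\<^esub> n = x" using x0c xc by (simp add: n_def G.m_assoc[symmetric])
          have "k x0 \<otimes>\<^bsub>E\<^esub> k n = k x0 \<otimes>\<^bsub>E\<^esub> \<one>\<^bsub>E\<^esub>" using km[OF x0(1) nF] xe x x0 kc by simp
          then have "k n = \<one>\<^bsub>E\<^esub>" using kc x0(1) nF E.l_cancel by blast
          then show "x \<in> (\<lambda>n. x0 \<otimes>\<^bsub>G\<^esub> n) ` ?N" using nF xe by force
        qed
      qed
    qed
    then show ?thesis by (metis bij_betw_same_card)
  qed
qed

lemma card_hom_fibers: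
  assumes G: "group G" and E: "group E" and F: "subgroup F G" "finite F"
    and kc: "\<And>x. x \<in> F \<Longrightarrow> k x \<in> carrier E"
    and km: "\<And>x y. x \<in> F \<Longrightarrow> y \<in> F \<Longrightarrow> k (x \<otimes>\<^bsub>G\<^esub> y) = k x \<otimes>\<^bsub>E\<^esub> k y"
  shows "card F = card (k ` F) * card {x\<in>F. k x = \<one>\<^bsub>E\<^esub>}"
proof -
  interpret G: group G by fact
  interpret E: group E by fact
  let ?N = "{x\<in>F. k x = \<one>\<^bsub>E\<^esub>}"
  have Fc: "F \<subseteq> carrier G" using F subgroup.subset by blast
  have fib: "card {x\<in>F. k x = y} = card ?N" if y: "y \<in> k ` F" for y
    using hom_fiber_card[OF assms y] by simp
  have "F = (\<Union>y\<in>k ` F. {x\<in>F. k x = y})" by auto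
  moreover have "card (\<Union>y\<in>k ` F. {x\<in>F. k x = y}) = (\<Sum>y\<in>k ` F. card {x\<in>F. k x = y})"
    by (rule card_UN_disjoint) (use F(2) in auto)
  ultimately have "card F = (\<Sum>y\<in>k ` F. card {x\<in>F. k x = y})" by simp
  also have "\<dots> = (\<Sum>y\<in>k ` F. card ?N)" using fib by (intro sum.cong) auto
  finally show ?thesis by simp
qed

lemma (in comm_group) cyc_subgroup:
  assumes t: "t \<in> carrier G" and n: "n > 0" "t [^] (n::nat) = \<one>"
  shows "subgroup (range (\<lambda>i::nat. t [^] i)) G" "finite (range (\<lambda>i::nat. t [^] i))"
proof -
  have red: "t [^] i = t [^] (i mod n)" for i :: nat
  proof -
    have "t [^] i = t [^] (n * (i div n) + i mod n)" by simp
    also have "\<dots> = t [^] (n * (i div n)) \<otimes> t [^] (i mod n)" using t by (simp add: nat_pow_mult)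
    also have "\<dots> = (t [^] n) [^] (i div n) \<otimes> t [^] (i mod n)" using t by (simp add: nat_pow_pow)
    finally show ?thesis using n t by simp
  qed
  have "range (\<lambda>i::nat. t [^] i) \<subseteq> (\<lambda>i. t [^] i) ` {..<n}"
  proof
    fix x assume "x \<in> range (\<lambda>i::nat. t [^] i)"
    then obtain i :: nat where "x = t [^] i" by blast
    then have "x = t [^] (i mod n)" using red by simp
    moreover have "i mod n \<in> {..<n}" using n by simp
    ultimately show "x \<in> (\<lambda>i. t [^] i) ` {..<n}" by blast
  qed
  then show "finite (range (\<lambda>i::nat. t [^] i))" using finite_subset by blast
  show "subgroup (range (\<lambda>i::nat. t [^] i)) G"
  proof (rule subgroupI)
    show "range (\<lambda>i::nat. t [^] i) \<subseteq> carrier G" using t by auto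
    show "range (\<lambda>i::nat. t [^] i) \<noteq> {}" by simp
    fix a b assume a: "a \<in> range (\<lambda>i::nat. t [^] i)" and b: "b \<in> range (\<lambda>i::nat. t [^] i)"
    then obtain i j :: nat where ij: "a = t [^] i" "b = t [^] j" by blast
    show "a \<otimes> b \<in> range (\<lambda>i::nat. t [^] i)" using ij t by (simp add: nat_pow_mult)
    have "t [^] (i * (n - 1)) \<otimes> t [^] i = \<one>"
    proof -
      have "t [^] (i * (n - 1)) \<otimes> t [^] i = t [^] (n * i)" using t n
        by (simp add: nat_pow_mult algebra_simps)
      also have "\<dots> = \<one>" using t n by (simp add: nat_pow_pow[symmetric])
      finally show ?thesis .
    qed
    then have "inv a = t [^] (i * (n - 1))" using ij t by (intro inv_equality) auto
    then show "inv a \<in> range (\<lambda>i::nat. t [^] i)" by simp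
  qed
qed

lemma (in comm_group) fin_sub:
  assumes sD: "subgroup D G" and tor: "\<And>x. x \<in> D \<Longrightarrow> \<exists>n>0. x [^] (n::nat) = \<one>"
    and T: "finite T" "T \<subseteq> D"
  shows "\<exists>F. subgroup F G \<and> finite F \<and> T \<subseteq> F \<and> F \<subseteq> D"
  using T
proof (induction T rule: finite_induct)
  case empty
  then show ?case using sD by (intro exI[of _ "{\<one>}"]) (auto simp: triv_subgroup subgroup.one_closed)
next
  case (insert t T)
  then obtain F where F: "subgroup F G" "finite F" "T \<subseteq> F" "F \<subseteq> D" by auto
  have tD: "t \<in> D" using insert by auto
  have tc: "t \<in> carrier G" using tD sD subgroup.subset by blast
  obtain n where n: "n > 0" "t [^] (n::nat) = \<one>" using tor tD by blast
  let ?C = "range (\<lambda>i::nat. t [^] i)"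
  have C: "subgroup ?C G" "finite ?C" using cyc_subgroup[OF tc n] by auto
  have CD: "?C \<subseteq> D" using tD sD by (auto simp: subgroup_int_pow_closed int_pow_int[symmetric])
  have Fc: "F \<subseteq> carrier G" using F subgroup.subset by blast
  have "subgroup (F <#> ?C) G" using subgroup_set_mult F C by blast
  moreover have "finite (F <#> ?C)"
  proof -
    have "F <#> ?C \<subseteq> (\<lambda>(a,b). a \<otimes> b) ` (F \<times> ?C)" by (auto simp: set_mult_def)
    then show ?thesis using F C finite_subset by blast
  qed
  moreover have "insert t T \<subseteq> F <#> ?C"
  proof -
    have "t = \<one> \<otimes> t [^] (1::nat)" using tc by simp
    moreover have "\<one> \<in> F" using F by (simp add: subgroup.one_closed)
    moreover have "t [^] (1::nat) \<in> ?C" by blast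
    ultimately have "t \<in> F <#> ?C" unfolding set_mult_mem by blast
    moreover have "x \<in> F <#> ?C" if "x \<in> T" for x
    proof -
      have "x = x \<otimes> t [^] (0::nat)" using that F Fc by auto
      moreover have "x \<in> F" using that F by auto
      moreover have "t [^] (0::nat) \<in> ?C" by blast
      ultimately show ?thesis unfolding set_mult_mem by blast
    qed
    ultimately show ?thesis by auto
  qed
  moreover have "F <#> ?C \<subseteq> D"
  proof
    fix z assume "z \<in> F <#> ?C"
    then obtain a b where ab: "a \<in> F" "b \<in> ?C" "z = a \<otimes> b" unfolding set_mult_mem by blast
    have "a \<in> D" "b \<in> D" using ab F CD by auto
    then show "z \<in> D" using ab sD subgroup.m_closed by metis
  qed
  ultimately show ?case by blast
qed

lemma socle_image_bound:
  assumes G: "comm_group G" and E: "comm_group E" and h: "h \<in> hom G E"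
    and sD: "subgroup D G" and tor: "\<And>x. x \<in> D \<Longrightarrow> \<exists>n>0. x [^]\<^bsub>G\<^esub> (n::nat) = \<one>\<^bsub>G\<^esub>"
    and fD: "finite {x\<in>D. x [^]\<^bsub>G\<^esub> (p::nat) = \<one>\<^bsub>G\<^esub>}"
  shows "finite {y\<in>h ` D. y [^]\<^bsub>E\<^esub> p = \<one>\<^bsub>E\<^esub>} \<and>
         card {y\<in>h ` D. y [^]\<^bsub>E\<^esub> p = \<one>\<^bsub>E\<^esub>} \<le> card {x\<in>D. x [^]\<^bsub>G\<^esub> p = \<one>\<^bsub>G\<^esub>}"
proof (rule ccontr)
  interpret G: comm_group G by fact
  interpret E: comm_group E by fact
  interpret hh: group_hom G E h using h by (simp add: group_hom_def group_hom_axioms_def G.is_group E.is_group)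
  let ?Dp = "{x\<in>D. x [^]\<^bsub>G\<^esub> p = \<one>\<^bsub>G\<^esub>}"
  let ?Ep = "{y\<in>h ` D. y [^]\<^bsub>E\<^esub> p = \<one>\<^bsub>E\<^esub>}"
  assume neg: "\<not> ?thesis"
  then have "\<exists>S. finite S \<and> card S = Suc (card ?Dp) \<and> S \<subseteq> ?Ep"
  proof (cases "finite ?Ep")
    case True
    then have "Suc (card ?Dp) \<le> card ?Ep" using neg by auto
    then obtain S where "S \<subseteq> ?Ep" "card S = Suc (card ?Dp)" "finite S" by (rule obtain_subset_with_card_n)
    then show ?thesis by blast
  next
    case False then show ?thesis using infinite_arbitrarily_large by blast
  qed
  then obtain S where S: "finite S" "card S = Suc (card ?Dp)" "S \<subseteq> ?Ep" by blast
  have Dc: "D \<subseteq> carrier G" using sD subgroup.subset by blast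
  define lift where "lift y = (SOME x. x \<in> D \<and> h x = y)" for y
  have lift: "lift y \<in> D \<and> h (lift y) = y" if "y \<in> S" for y
  proof -
    have "\<exists>x. x \<in> D \<and> h x = y" using that S by auto
    then show ?thesis unfolding lift_def by (rule someI_ex)
  qed
  define T where "T = lift ` S"
  have ST: "S \<subseteq> h ` T"
  proof
    fix x assume x: "x \<in> S"
    then have "x = h (lift x)" using lift by auto
    moreover have "lift x \<in> T" using x by (simp add: T_def)
    ultimately show "x \<in> h ` T" by blast
  qed
  have T: "finite T" "T \<subseteq> D" "S \<subseteq> h ` T" using S lift ST by (auto simp: T_def)
  obtain F where F: "subgroup F G" "finite F" "T \<subseteq> F" "F \<subseteq> D" using G.fin_sub[OF sD tor T(1,2)] by blast
  have Fc: "F \<subseteq> carrier G" using F subgroup.subset by blast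
  have Fc': "\<And>x. x \<in> F \<Longrightarrow> x \<in> carrier G" using Fc by auto
  define Y where "Y = h ` F"
  have Y: "subgroup Y E" "finite Y" using hh.subgroup_img_is_subgroup[OF F(1)] F by (auto simp: Y_def)
  have Yc: "Y \<subseteq> carrier E" using Y subgroup.subset by blast
  have Yc': "\<And>x. x \<in> Y \<Longrightarrow> x \<in> carrier E" using Yc by auto
  let ?Fp = "{x\<in>F. x [^]\<^bsub>G\<^esub> p = \<one>\<^bsub>G\<^esub>}"
  let ?Yp = "{y\<in>Y. y [^]\<^bsub>E\<^esub> p = \<one>\<^bsub>E\<^esub>}"
  let ?NF = "{x\<in>F. h x = \<one>\<^bsub>E\<^esub>}"
  let ?pF = "(\<lambda>x. x [^]\<^bsub>G\<^esub> p) ` F"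
  let ?pY = "(\<lambda>x. x [^]\<^bsub>E\<^esub> p) ` Y"
  have c1: "card F = card ?pF * card ?Fp"
    by (rule card_hom_fibers[OF G.is_group G.is_group F(1) F(2)]) (auto simp: G.nat_pow_distrib Fc')
  have c2: "card Y = card ?pY * card ?Yp"
    by (rule card_hom_fibers[OF E.is_group E.is_group Y(1) Y(2)]) (auto simp: E.nat_pow_distrib Yc')
  have c3: "card F = card Y * card ?NF" unfolding Y_def
    by (rule card_hom_fibers[OF G.is_group E.is_group F(1) F(2)]) (auto simp: hh.hom_mult Fc')
  have "(\<lambda>x. (h x) [^]\<^bsub>E\<^esub> p) ` F = (\<lambda>x. h (x [^]\<^bsub>G\<^esub> p)) ` F"
    by (rule image_cong) (simp_all add: hh.hom_nat_pow Fc')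
  then have pYe: "?pY = h ` ?pF" by (simp add: Y_def image_image)
  have fibNF: "card {x\<in>F. h x = y} = card ?NF" if "y \<in> h ` F" for y
    by (rule hom_fiber_card[OF G.is_group E.is_group F(1) F(2)]) (use that in \<open>auto simp: hh.hom_mult Fc'\<close>)
  have c4: "card ?pF \<le> card ?pY * card ?NF"
  proof -
    have "card ?pF \<le> card (h ` ?pF) * card ?NF"
    proof (rule card_le_fibers)
      show "finite ?pF" using F by simp
      fix y assume y: "y \<in> h ` ?pF"
      have Fpow: "x [^]\<^bsub>G\<^esub> p \<in> F" if "x \<in> F" for x
        using G.subgroup_int_pow_closed[OF F(1) that, of "int p"] by (simp add: int_pow_int)
      have "{x \<in> ?pF. h x = y} \<subseteq> {x\<in>F. h x = y}" using Fpow by auto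
      moreover have "y \<in> h ` F" using y Fpow by auto
      ultimately show "card {x \<in> ?pF. h x = y} \<le> card ?NF"
      proof -
        assume sub: "{x \<in> ?pF. h x = y} \<subseteq> {x\<in>F. h x = y}" and yF: "y \<in> h ` F"
        have "card {x \<in> ?pF. h x = y} \<le> card {x\<in>F. h x = y}" by (rule card_mono) (use F(2) sub in auto)
        then show ?thesis using fibNF[OF yF] by simp
      qed
    qed
    then show ?thesis using pYe by simp
  qed
  have pos: "card ?pY * card ?NF > 0"
  proof -
    have "\<one>\<^bsub>E\<^esub> \<in> ?pY" using Y by (force intro: subgroup.one_closed)
    moreover have "\<one>\<^bsub>G\<^esub> \<in> ?NF" using F by (auto intro: subgroup.one_closed)
    ultimately show ?thesis using Y F by (auto simp: card_gt_0_iff)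
  qed
  have "card ?pY * card ?NF * card ?Yp = card ?pY * card ?NF * card ?Fp \<or>
        card ?pY * card ?NF * card ?Yp < card ?pY * card ?NF * card ?Fp \<or>
        card ?pY * card ?NF * card ?Yp \<le> card ?pY * card ?NF * card ?Fp"
  proof -
    have "card ?pY * card ?NF * card ?Yp = card F" using c2 c3 by (simp add: algebra_simps)
    also have "\<dots> \<le> card ?pY * card ?NF * card ?Fp" using c1 c4 by (simp add: mult_right_mono)
    finally show ?thesis by simp
  qed
  then have YpFp: "card ?Yp \<le> card ?Fp" using pos by (auto dest: mult_le_cancel1[THEN iffD1] simp: mult.assoc)
  have "h ` T \<subseteq> h ` F" using F(3) by (rule image_mono)
  then have "S \<subseteq> ?Yp" using S T unfolding Y_def by blast
  then have "card S \<le> card ?Yp" using Y by (intro card_mono) auto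
  also have "\<dots> \<le> card ?Fp" by fact
  also have "\<dots> \<le> card ?Dp" using F fD by (intro card_mono) auto
  finally show False using S by simp
qed

definition pden :: "nat \<Rightarrow> rat set" where
  "pden p = {q. \<exists>k::nat. q * of_nat (p ^ k) \<in> \<int>}"

lemma pden_add: "x \<in> pden p \<Longrightarrow> y \<in> pden p \<Longrightarrow> x + y \<in> pden p"
proof -
  assume "x \<in> pden p" "y \<in> pden p"
  then obtain k j where k: "x * of_nat (p ^ k) \<in> \<int>" and j: "y * of_nat (p ^ j) \<in> \<int>" by (auto simp: pden_def)
  have "(x + y) * of_nat (p ^ (k + j)) = (x * of_nat (p ^ k)) * of_nat (p ^ j) + (y * of_nat (p ^ j)) * of_nat (p ^ k)"
    by (simp add: power_add algebra_simps)
  also have "\<dots> \<in> \<int>" using Ints_add[OF Ints_mult[OF k Ints_of_nat] Ints_mult[OF j Ints_of_nat]] .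
  finally show ?thesis by (auto simp: pden_def)
qed

lemma pden_int: "of_int z \<in> pden p"
  by (auto simp: pden_def intro!: exI[of _ 0])

lemma pden_minus: "x \<in> pden p \<Longrightarrow> - x \<in> pden p"
  by (auto simp: pden_def)

lemma pden_nat_mult: "x \<in> pden p \<Longrightarrow> of_nat m * x \<in> pden p"
proof -
  assume "x \<in> pden p"
  then obtain k where k: "x * of_nat (p ^ k) \<in> \<int>" by (auto simp: pden_def)
  have "(of_nat m * x) * of_nat (p ^ k) = of_nat m * (x * of_nat (p ^ k))" by simp
  also have "\<dots> \<in> \<int>" using Ints_mult[OF Ints_of_nat k] .
  finally show ?thesis by (auto simp: pden_def)
qed

lemma frac_eq_sub: "frac (x::rat) = x + of_int (- \<lfloor>x\<rfloor>)"
  by (simp add: frac_def)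

lemma pden_frac: "x \<in> pden p \<Longrightarrow> frac x \<in> pden p"
  by (simp only: frac_eq_sub) (intro pden_add pden_int)

lemma frac_frac_add1: "frac (frac a + b) = frac (a + (b::rat))"
proof -
  have "frac a + b = (a + b) + of_int (- \<lfloor>a\<rfloor>)" by (simp add: frac_def)
  then show ?thesis by (simp only: frac_add_of_int_right)
qed

lemma frac_frac_add2: "frac (a + frac b) = frac (a + (b::rat))"
  using frac_frac_add1[of b a] by (simp add: add.commute)

lemma qc_carrier_iff:
  assumes p: "Factorial_Ring.prime p"
  shows "q \<in> carrier (quasicyclic p) \<longleftrightarrow> 0 \<le> q \<and> q < 1 \<and> q \<in> pden p"
proof -
  obtain a b where ab: "quotient_of q = (a,b)" by (cases "quotient_of q") auto
  have b0: "b > 0" using ab quotient_of_denom_pos by blast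
  have cop: "coprime a b" using ab quotient_of_coprime by blast
  have qe: "q = of_int a / of_int b" using ab quotient_of_div by blast
  have "(\<exists>k. b = int p ^ k) \<longleftrightarrow> q \<in> pden p"
  proof
    assume "\<exists>k. b = int p ^ k"
    then obtain k where k: "b = int p ^ k" by blast
    have "of_int b = (of_nat (p ^ k) :: rat)" using k by simp
    moreover have "q * of_int b = of_int a" using qe b0 by simp
    ultimately have "q * of_nat (p ^ k) = of_int a" by simp
    then have "q * of_nat (p ^ k) \<in> \<int>" by (metis Ints_of_int)
    then show "q \<in> pden p" unfolding pden_def by blast
  next
    assume "q \<in> pden p"
    then obtain k where "q * of_nat (p ^ k) \<in> \<int>" by (auto simp: pden_def)
    then obtain m where m: "q * of_nat (p ^ k) = of_int m" by (auto elim: Ints_cases)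
    have "of_int a * of_nat (p ^ k) = (of_int m * of_int b :: rat)" using m qe b0
      by (simp add: field_simps)
    then have "a * int (p ^ k) = m * b" by (metis of_int_eq_iff of_int_mult of_int_of_nat_eq)
    then have "b dvd a * int (p ^ k)" by simp
    then have "b dvd int (p ^ k)" using cop by (simp add: coprime_commute coprime_dvd_mult_right_iff)
    then have "nat b dvd p ^ k" using b0 by (metis int_dvd_int_iff int_nat_eq less_le)
    then obtain i where "nat b = p ^ i" using divides_primepow_nat[OF p] by blast
    then have "b = int p ^ i" using b0 by (metis int_nat_eq less_le of_nat_power)
    then show "\<exists>k. b = int p ^ k" by blast
  qed
  then show ?thesis by (simp add: quasicyclic_def ab)
qed

lemma qc_simps: "\<one>\<^bsub>quasicyclic p\<^esub> = 0" "x \<otimes>\<^bsub>quasicyclic p\<^esub> y = frac (x + y)"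
  by (simp_all add: quasicyclic_def)

lemma qc_group:
  assumes p: "Factorial_Ring.prime p"
  shows "group (quasicyclic p)"
proof (rule groupI)
  note ci = qc_carrier_iff[OF p]
  fix x y z
  assume x: "x \<in> carrier (quasicyclic p)"
  show "\<one>\<^bsub>quasicyclic p\<^esub> \<otimes>\<^bsub>quasicyclic p\<^esub> x = x" using x by (simp add: qc_simps ci frac_eq)
  show "\<exists>y\<in>carrier (quasicyclic p). y \<otimes>\<^bsub>quasicyclic p\<^esub> x = \<one>\<^bsub>quasicyclic p\<^esub>"
  proof (rule bexI[of _ "frac (- x)"])
    show "frac (- x) \<otimes>\<^bsub>quasicyclic p\<^esub> x = \<one>\<^bsub>quasicyclic p\<^esub>" by (simp add: qc_simps frac_frac_add1)
    show "frac (- x) \<in> carrier (quasicyclic p)" using x by (simp add: ci frac_lt_1 pden_frac pden_minus)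
  qed
  assume y: "y \<in> carrier (quasicyclic p)"
  show "x \<otimes>\<^bsub>quasicyclic p\<^esub> y \<in> carrier (quasicyclic p)"
    using x y by (simp add: ci qc_simps frac_lt_1 pden_frac pden_add)
  assume z: "z \<in> carrier (quasicyclic p)"
  show "x \<otimes>\<^bsub>quasicyclic p\<^esub> y \<otimes>\<^bsub>quasicyclic p\<^esub> z = x \<otimes>\<^bsub>quasicyclic p\<^esub> (y \<otimes>\<^bsub>quasicyclic p\<^esub> z)"
    by (simp add: qc_simps frac_frac_add1 frac_frac_add2 add.assoc)
next
  show "\<one>\<^bsub>quasicyclic p\<^esub> \<in> carrier (quasicyclic p)" using qc_carrier_iff[OF p] pden_int[of 0 p] by (simp add: qc_simps)
qed

lemma qc_pow: "x [^]\<^bsub>quasicyclic p\<^esub> (m::nat) = frac (of_nat m * x)"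
proof (induction m)
  case 0 then show ?case by (simp add: nat_pow_def quasicyclic_def)
next
  case (Suc m)
  then show ?case by (simp add: qc_simps frac_frac_add1 algebra_simps)
qed

lemma qc_torsion:
  assumes p: "Factorial_Ring.prime p" and x: "x \<in> carrier (quasicyclic p)"
  shows "\<exists>m>0. x [^]\<^bsub>quasicyclic p\<^esub> (m::nat) = \<one>\<^bsub>quasicyclic p\<^esub>"
proof -
  obtain k where k: "x * of_nat (p ^ k) \<in> \<int>" using x qc_carrier_iff[OF p] by (auto simp: pden_def)
  have "p ^ k > 0" using p prime_gt_0_nat by simp
  moreover have "x [^]\<^bsub>quasicyclic p\<^esub> (p ^ k) = \<one>\<^bsub>quasicyclic p\<^esub>"
    using k by (simp add: qc_pow qc_simps mult.commute)
  ultimately show ?thesis by blast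
qed

lemma qc_divisible:
  assumes p: "Factorial_Ring.prime p" and x: "x \<in> carrier (quasicyclic p)" and m: "m > 0"
  shows "\<exists>y\<in>carrier (quasicyclic p). y [^]\<^bsub>quasicyclic p\<^esub> (m::nat) = x"
proof -
  note ci = qc_carrier_iff[OF p]
  obtain k where k: "x * of_nat (p ^ k) \<in> \<int>" using x ci by (auto simp: pden_def)
  then obtain a where a: "x * of_nat (p ^ k) = of_int a" by (auto elim: Ints_cases)
  have p1: "p > 1" using p prime_gt_1_nat by blast
  obtain m' where mm: "m = p ^ multiplicity p m * m'" "\<not> p dvd m'"
    using multiplicity_decompose'[of m p] m p1 by auto
  define e where "e = multiplicity p m"
  have m'0: "m' > 0" using mm m by (auto intro: gr0I)
  have "coprime (int m') (int (p ^ k))"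
  proof -
    have "coprime p m'" using prime_imp_coprime[OF p mm(2)] .
    then have "coprime m' p" by (simp add: coprime_commute)
    then have "coprime m' (p ^ k)" by simp
    then show ?thesis by simp
  qed
  then obtain u v where uv: "u * int m' + v * int (p ^ k) = 1" using bezout_int by (metis coprime_iff_gcd_eq_1)
  define t where "t = - a * v"
  have "int m' dvd a + t * int (p ^ k)"
  proof -
    have "a + t * int (p ^ k) = a * (u * int m')" using uv by (simp add: t_def algebra_simps) (metis add_diff_cancel_left' diff_add_cancel mult.assoc mult.right_neutral right_diff_distrib)
    then show ?thesis by simp
  qed
  then obtain w where w: "a + t * int (p ^ k) = int m' * w" by (auto elim: dvdE)
  define z where "z = (x + of_int t) / of_nat m"
  define y where "y = frac z"
  have zint: "z * of_nat (p ^ (k + e)) = of_int w"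
  proof -
    have "z * of_nat (p ^ (k + e)) = (x * of_nat (p ^ k) + of_int t * of_nat (p ^ k)) * of_nat (p ^ e) / of_nat m"
      by (simp add: z_def power_add algebra_simps)
    also have "\<dots> = of_int (int m' * w) * of_nat (p ^ e) / of_nat m" using a w
      by (metis (no_types, lifting) of_int_add of_int_mult of_int_of_nat_eq)
    also have "\<dots> = of_int w"
    proof -
      have eq: "p ^ e * m' = m" unfolding e_def using mm(1) by (rule sym)
      have mq: "(of_nat m :: rat) = of_nat m' * of_nat (p ^ e)" by (metis eq of_nat_mult mult.commute)
      show ?thesis using m m'0 p1 by (simp add: mq)
    qed
    finally show ?thesis .
  qed
  have "y \<in> pden p"
  proof -
    have "z * of_nat (p ^ (k + e)) \<in> \<int>" using zint by (metis Ints_of_int)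
    then have "z \<in> pden p" unfolding pden_def by blast
    then show ?thesis by (simp add: y_def pden_frac)
  qed
  then have yc: "y \<in> carrier (quasicyclic p)" using ci by (simp add: y_def frac_lt_1)
  have "y [^]\<^bsub>quasicyclic p\<^esub> m = frac (of_nat m * frac z)" by (simp add: qc_pow y_def)
  also have "of_nat m * frac z = of_nat m * z + of_int (- (int m * \<lfloor>z\<rfloor>))" by (simp add: frac_def algebra_simps)
  also have "of_nat m * z = x + of_int t" using m by (simp add: z_def)
  also have "frac (x + of_int t + of_int (- (int m * \<lfloor>z\<rfloor>))) = x" using x ci
    by (simp only: frac_add_of_int_right) (simp add: frac_eq)
  finally show ?thesis using yc by blast
qed

lemma qc_socle:
  assumes p: "Factorial_Ring.prime p" and q: "Factorial_Ring.prime q"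
    and x: "x \<in> carrier (quasicyclic q)" and xp: "x [^]\<^bsub>quasicyclic q\<^esub> p = \<one>\<^bsub>quasicyclic q\<^esub>"
  shows "x \<in> (if q = p then (\<lambda>j. of_nat j / of_nat p) ` {..<p} else {0})"
proof -
  note ci = qc_carrier_iff[OF q]
  have px: "of_nat p * x \<in> \<int>" using xp by (simp add: qc_pow qc_simps)
  have x01: "0 \<le> x" "x < 1" using x ci by auto
  show ?thesis
  proof (cases "q = p")
    case True
    obtain j where j: "of_nat p * x = of_int j" using px by (auto elim: Ints_cases)
    have p0: "p > 0" using p prime_gt_0_nat by blast
    have "0 \<le> j" using j x01 p0 by (metis of_int_0_le_iff of_nat_0_le_iff zero_le_mult_iff)
    moreover have "j < int p" using j x01 p0
      by (metis mult_less_cancel_left_pos mult.right_neutral of_int_less_iff of_int_of_nat_eq of_nat_0_less_iff)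
    ultimately have "nat j \<in> {..<p}" by auto
    moreover have "x = of_nat (nat j) / of_nat p" using j p0 \<open>0 \<le> j\<close> by (simp add: field_simps)
    ultimately show ?thesis using True by auto
  next
    case False
    obtain k where k: "x * of_nat (q ^ k) \<in> \<int>" using x ci by (auto simp: pden_def)
    have "coprime p (q ^ k)" using False p q by (simp add: primes_coprime coprime_commute)
    then have "coprime (int p) (int (q ^ k))" by simp
    then obtain u v where uv: "u * int p + v * int (q ^ k) = 1" using bezout_int by (metis coprime_iff_gcd_eq_1)
    have "x = of_int u * (of_nat p * x) + of_int v * (x * of_nat (q ^ k))"
    proof -
      have "(of_int (u * int p + v * int (q ^ k)) :: rat) = 1" using uv by simp
      then have "of_int u * of_nat p + of_int v * of_nat (q ^ k) = (1::rat)" by simp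
      then show ?thesis by (metis (no_types, lifting) distrib_right mult.assoc mult.commute mult.left_neutral)
    qed
    also have "\<dots> \<in> \<int>" using Ints_add[OF Ints_mult[OF Ints_of_int px] Ints_mult[OF Ints_of_int k]] .
    finally have "x \<in> \<int>" .
    then obtain i where i: "x = of_int i" by (auto elim: Ints_cases)
    then have "0 \<le> i" "i < 1" using x01 by auto
    then have "x = 0" using i by simp
    then show ?thesis using False by simp
  qed
qed

lemma qs_split: "(\<lambda>(p, i). quasicyclic p) j = quasicyclic (fst j)"
  by (simp add: case_prod_beta)

lemma qs_group: "group (quasicyclic_sum n)"
  unfolding quasicyclic_sum_def by (rule sum_group) (auto simp: qc_group)

lemma qs_carrier: "carrier (quasicyclic_sum n) =
  {x \<in> \<Pi>\<^sub>E j\<in>{(p, i). Factorial_Ring.prime (p::nat) \<and> i < n p}. carrier (quasicyclic (fst j)).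
     finite {j \<in> {(p, i). Factorial_Ring.prime (p::nat) \<and> i < n p}. x j \<noteq> 0}}"
  unfolding quasicyclic_sum_def
  by (subst carrier_sum_group) (auto simp: qc_group qs_split qc_simps)

lemma qs_one: "\<one>\<^bsub>quasicyclic_sum n\<^esub> = (\<lambda>j\<in>{(p, i). Factorial_Ring.prime (p::nat) \<and> i < n p}. 0)"
  unfolding quasicyclic_sum_def by (simp add: qs_split qc_simps)

lemma qs_pow: "x [^]\<^bsub>quasicyclic_sum n\<^esub> (m::nat) =
   (\<lambda>j\<in>{(p, i). Factorial_Ring.prime (p::nat) \<and> i < n p}. frac (of_nat m * x j))"
proof (induction m)
  case 0 then show ?case by (simp add: nat_pow_def qs_one)
next
  case (Suc m)
  have "x [^]\<^bsub>quasicyclic_sum n\<^esub> Suc m = x [^]\<^bsub>quasicyclic_sum n\<^esub> m \<otimes>\<^bsub>quasicyclic_sum n\<^esub> x" by simp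
  also have "\<dots> = (\<lambda>j\<in>{(p, i). Factorial_Ring.prime (p::nat) \<and> i < n p}. frac (of_nat m * x j)) \<otimes>\<^bsub>quasicyclic_sum n\<^esub> x"
    by (simp only: Suc.IH)
  also have "\<dots> = (\<lambda>j\<in>{(p, i). Factorial_Ring.prime (p::nat) \<and> i < n p}. frac (of_nat (Suc m) * x j))"
    unfolding quasicyclic_sum_def mult_sum_group
    by (auto simp: fun_eq_iff qs_split qc_simps frac_frac_add1 algebra_simps)
  finally show ?case .
qed

lemma qs_torsion:
  assumes x: "x \<in> carrier (quasicyclic_sum n)"
  shows "\<exists>m>0. x [^]\<^bsub>quasicyclic_sum n\<^esub> (m::nat) = \<one>\<^bsub>quasicyclic_sum n\<^esub>"
proof -
  let ?I = "{(p, i). Factorial_Ring.prime (p::nat) \<and> i < n p}"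
  define S where "S = {j \<in> ?I. x j \<noteq> 0}"
  have xc: "\<And>j. j \<in> ?I \<Longrightarrow> x j \<in> carrier (quasicyclic (fst j))" and fS: "finite S"
    using x by (auto simp: qs_carrier S_def PiE_iff)
  have ex: "\<exists>m>0. of_nat m * x j \<in> \<int>" if "j \<in> ?I" for j
  proof -
    have "Factorial_Ring.prime (fst j)" using that by auto
    from qc_torsion[OF this xc[OF that]] obtain m where "m > 0" "frac (of_nat m * x j) = 0"
      by (auto simp: qc_pow qc_simps)
    then show ?thesis by auto
  qed
  define mf where "mf j = (SOME m. m > 0 \<and> of_nat m * x j \<in> \<int>)" for j
  have mf: "mf j > 0 \<and> of_nat (mf j) * x j \<in> \<int>" if "j \<in> ?I" for j
    unfolding mf_def using someI_ex[OF ex[OF that]] .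
  define N where "N = prod mf S"
  have N0: "N > 0" using mf fS by (auto simp: N_def S_def intro!: prod_pos)
  have "x [^]\<^bsub>quasicyclic_sum n\<^esub> N = \<one>\<^bsub>quasicyclic_sum n\<^esub>"
    unfolding qs_pow qs_one
  proof (rule restrict_ext)
    fix j assume j: "j \<in> ?I"
    show "frac (of_nat N * x j) = 0"
    proof (cases "j \<in> S")
      case True
      then have "mf j dvd N" using fS by (simp add: N_def dvd_prodI)
      then obtain r where r: "N = mf j * r" by (auto elim: dvdE)
      have "of_nat N * x j = of_nat r * (of_nat (mf j) * x j)" by (simp add: r)
      also have "\<dots> \<in> \<int>" using Ints_mult[OF Ints_of_nat conjunct2[OF mf[OF j]]] .
      finally show ?thesis by simp
    next
      case False then show ?thesis using j by (simp add: S_def)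
    qed
  qed
  then show ?thesis using N0 by blast
qed

lemma qs_divisible:
  assumes x: "x \<in> carrier (quasicyclic_sum n)" and m: "m > 0"
  shows "\<exists>y\<in>carrier (quasicyclic_sum n). y [^]\<^bsub>quasicyclic_sum n\<^esub> (m::nat) = x"
proof -
  let ?I = "{(p, i). Factorial_Ring.prime (p::nat) \<and> i < n p}"
  have xc: "\<And>j. j \<in> ?I \<Longrightarrow> x j \<in> carrier (quasicyclic (fst j))" and fS: "finite {j \<in> ?I. x j \<noteq> 0}"
    and xe: "x \<in> extensional ?I"
    using x by (auto simp: qs_carrier PiE_iff)
  have ex: "\<exists>y. y \<in> carrier (quasicyclic (fst j)) \<and> frac (of_nat m * y) = x j" if "j \<in> ?I" for j
  proof -
    have "Factorial_Ring.prime (fst j)" using that by auto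
    from qc_divisible[OF this xc[OF that] m] show ?thesis by (auto simp: qc_pow)
  qed
  define y where "y = (\<lambda>j\<in>?I. if x j = 0 then 0 else (SOME y. y \<in> carrier (quasicyclic (fst j)) \<and> frac (of_nat m * y) = x j))"
  have yj: "y j \<in> carrier (quasicyclic (fst j)) \<and> frac (of_nat m * y j) = x j" if j: "j \<in> ?I" for j
  proof (cases "x j = 0")
    case True
    have "Factorial_Ring.prime (fst j)" using j by auto
    then have "(0::rat) \<in> carrier (quasicyclic (fst j))" using qc_carrier_iff pden_int[of 0] by force
    then show ?thesis using True j by (simp add: y_def)
  next
    case False
    then show ?thesis using j someI_ex[OF ex[OF j]] by (simp add: y_def)
  qed
  have "y \<in> carrier (quasicyclic_sum n)"
  proof -
    have "{j \<in> ?I. y j \<noteq> 0} \<subseteq> {j \<in> ?I. x j \<noteq> 0}" by (auto simp: y_def)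
    then have "finite {j \<in> ?I. y j \<noteq> 0}" using fS finite_subset by blast
    moreover have "y \<in> (\<Pi>\<^sub>E j\<in>?I. carrier (quasicyclic (fst j)))" using yj by (auto simp: y_def PiE_iff)
    ultimately show ?thesis by (simp add: qs_carrier)
  qed
  moreover have "y [^]\<^bsub>quasicyclic_sum n\<^esub> m = x"
    unfolding qs_pow using yj xe by (auto simp: fun_eq_iff extensional_def)
  ultimately show ?thesis by blast
qed

lemma qs_socle:
  assumes p: "Factorial_Ring.prime (p::nat)"
  shows "finite {x \<in> carrier (quasicyclic_sum n). x [^]\<^bsub>quasicyclic_sum n\<^esub> p = \<one>\<^bsub>quasicyclic_sum n\<^esub>}"
proof -
  let ?I = "{(p, i). Factorial_Ring.prime (p::nat) \<and> i < n p}"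
  define V where "V j = (if fst j = p then (\<lambda>k. of_nat k / of_nat p) ` {..<p} else {0::rat})" for j :: "nat \<times> nat"
  define J where "J = {(p, i) | i. i < n p}"
  have fJ: "finite J" unfolding J_def by simp
  have JI: "J \<subseteq> ?I" using p by (auto simp: J_def)
  have sub: "{x \<in> carrier (quasicyclic_sum n). x [^]\<^bsub>quasicyclic_sum n\<^esub> p = \<one>\<^bsub>quasicyclic_sum n\<^esub>} \<subseteq> (\<Pi>\<^sub>E j\<in>?I. V j)"
  proof
    fix x assume "x \<in> {x \<in> carrier (quasicyclic_sum n). x [^]\<^bsub>quasicyclic_sum n\<^esub> p = \<one>\<^bsub>quasicyclic_sum n\<^esub>}"
    then have x: "x \<in> carrier (quasicyclic_sum n)" and xp: "x [^]\<^bsub>quasicyclic_sum n\<^esub> p = \<one>\<^bsub>quasicyclic_sum n\<^esub>" by auto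
    have xc: "\<And>j. j \<in> ?I \<Longrightarrow> x j \<in> carrier (quasicyclic (fst j))" and xe: "x \<in> extensional ?I"
      using x by (auto simp: qs_carrier PiE_iff)
    have "x j \<in> V j" if j: "j \<in> ?I" for j
    proof -
      have q: "Factorial_Ring.prime (fst j)" using j by auto
      have "frac (of_nat p * x j) = 0" using fun_cong[OF xp, of j] j by (simp add: qs_pow qs_one)
      then have "x j [^]\<^bsub>quasicyclic (fst j)\<^esub> p = \<one>\<^bsub>quasicyclic (fst j)\<^esub>" by (simp add: qc_pow qc_simps)
      from qc_socle[OF p q xc[OF j] this] show ?thesis by (simp add: V_def)
    qed
    then show "x \<in> (\<Pi>\<^sub>E j\<in>?I. V j)" using xe by (auto simp: PiE_iff)
  qed
  have inj: "inj_on (\<lambda>x. restrict x J) (\<Pi>\<^sub>E j\<in>?I. V j)"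
  proof (rule inj_onI)
    fix x y assume x: "x \<in> (\<Pi>\<^sub>E j\<in>?I. V j)" and y: "y \<in> (\<Pi>\<^sub>E j\<in>?I. V j)" and e: "restrict x J = restrict y J"
    show "x = y"
    proof
      fix j
      show "x j = y j"
      proof (cases "j \<in> J")
        case True then show ?thesis using fun_cong[OF e, of j] by simp
      next
        case False
        show ?thesis
        proof (cases "j \<in> ?I")
          case True
          then have "fst j \<noteq> p" using False by (auto simp: J_def)
          then have V0: "V j = {0}" by (simp add: V_def)
          have "x j \<in> V j" "y j \<in> V j" using x y True by (auto simp: PiE_iff)
          then show ?thesis using V0 by simp
        next
          case False then show ?thesis using PiE_arb[OF x False] PiE_arb[OF y False] by simp
        qed
      qed
    qed
  qed
  have "(\<lambda>x. restrict x J) ` (\<Pi>\<^sub>E j\<in>?I. V j) \<subseteq> (\<Pi>\<^sub>E j\<in>J. V j)" using JI by (auto simp: PiE_iff)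
  moreover have "finite (\<Pi>\<^sub>E j\<in>J. V j)" using fJ by (intro finite_PiE) (auto simp: V_def)
  ultimately have "finite ((\<lambda>x. restrict x J) ` (\<Pi>\<^sub>E j\<in>?I. V j))" by (rule finite_subset)
  then have "finite (\<Pi>\<^sub>E j\<in>?I. V j)" using inj by (rule finite_imageD)
  then show ?thesis using sub finite_subset by blast
qed

lemma (in comm_group) swap_eq:
  assumes c: "a \<in> carrier G" "b \<in> carrier G" "c \<in> carrier G" "d \<in> carrier G" and e: "a \<otimes> b = c \<otimes> d"
  shows "a \<otimes> inv c = d \<otimes> inv b"
proof -
  have "(a \<otimes> inv c) \<otimes> b = a \<otimes> (b \<otimes> inv c)" using c by (simp add: m_assoc m_comm[of "inv c" b])
  also have "\<dots> = (c \<otimes> d) \<otimes> inv c" using c e by (simp add: m_assoc[symmetric])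
  also have "\<dots> = d" using c by (simp add: m_comm[of c d] m_assoc)
  finally have "d = (a \<otimes> inv c) \<otimes> b" by simp
  then show ?thesis using c by (simp add: inv_solve_right)
qed

lemma sub_comm_group:
  assumes "comm_group G" "subgroup B G" shows "comm_group (G\<lparr>carrier := B\<rparr>)"
proof -
  interpret G: comm_group G by fact
  have "group (G\<lparr>carrier := B\<rparr>)" using subgroup.subgroup_is_group[OF assms(2) G.is_group] .
  then show ?thesis
    by (rule group.group_comm_groupI) (use assms(2) in \<open>auto simp: G.m_comm subgroup.mem_carrier\<close>)
qed

lemma bassian_sub_noDT:
  assumes G: "comm_group G" and sB: "subgroup B G" and Bas: "Bassian (G\<lparr>carrier := B\<rparr>)"
    and sP: "subgroup P G" "P \<subseteq> B"
    and dv: "\<And>x n. x \<in> P \<Longrightarrow> (n::nat) > 0 \<Longrightarrow> \<exists>y\<in>P. y [^]\<^bsub>G\<^esub> n = x"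
    and tor: "\<And>x. x \<in> P \<Longrightarrow> \<exists>n>0. x [^]\<^bsub>G\<^esub> (n::nat) = \<one>\<^bsub>G\<^esub>"
    and x: "x \<in> P"
  shows "x = \<one>\<^bsub>G\<^esub>"
proof -
  interpret G: comm_group G by fact
  have cg: "comm_group (G\<lparr>carrier := B\<rparr>)" using sub_comm_group[OF G sB] .
  have sPB: "subgroup P (G\<lparr>carrier := B\<rparr>)" using G.subgroup_incl[OF sP(1) sB sP(2)] .
  have "x = \<one>\<^bsub>G\<lparr>carrier := B\<rparr>\<^esub>"
  proof (rule comm_group.bassian_no_div_torsion[OF cg Bas sPB _ _ x])
    fix y n assume "y \<in> P" "(n::nat) > 0"
    then show "\<exists>z\<in>P. z [^]\<^bsub>G\<lparr>carrier := B\<rparr>\<^esub> n = y" using dv G.nat_pow_consistent by metis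
  next
    fix y assume "y \<in> P"
    then show "\<exists>n>0. y [^]\<^bsub>G\<lparr>carrier := B\<rparr>\<^esub> (n::nat) = \<one>\<^bsub>G\<lparr>carrier := B\<rparr>\<^esub>" using tor G.nat_pow_consistent by simp
  qed
  then show ?thesis by simp
qed

lemma bassian_sub_rel:
  assumes G: "comm_group G" and sB: "subgroup B G" and Bas: "Bassian (G\<lparr>carrier := B\<rparr>)"
    and R: "R \<subseteq> B \<times> B"
    and one: "(\<one>\<^bsub>G\<^esub>, \<one>\<^bsub>G\<^esub>) \<in> R"
    and mul: "\<And>a b c d. (a,b) \<in> R \<Longrightarrow> (c,d) \<in> R \<Longrightarrow> (a \<otimes>\<^bsub>G\<^esub> c, b \<otimes>\<^bsub>G\<^esub> d) \<in> R"
    and inv: "\<And>a b. (a,b) \<in> R \<Longrightarrow> (inv\<^bsub>G\<^esub> a, inv\<^bsub>G\<^esub> b) \<in> R"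
    and tot: "\<And>a. a \<in> B \<Longrightarrow> \<exists>b. (a,b) \<in> R"
    and inj: "\<And>x k. (x,k) \<in> R \<Longrightarrow> (\<one>\<^bsub>G\<^esub>,k) \<in> R \<Longrightarrow> x = \<one>\<^bsub>G\<^esub>"
    and k: "(\<one>\<^bsub>G\<^esub>, k) \<in> R"
  shows "k = \<one>\<^bsub>G\<^esub>"
proof -
  interpret G: comm_group G by fact
  have cg: "comm_group (G\<lparr>carrier := B\<rparr>)" using sub_comm_group[OF G sB] .
  have "k = \<one>\<^bsub>G\<lparr>carrier := B\<rparr>\<^esub>"
  proof (rule comm_group.bassian_rel[OF cg Bas, of R])
    show "R \<subseteq> carrier (G\<lparr>carrier := B\<rparr>) \<times> carrier (G\<lparr>carrier := B\<rparr>)" using R by simp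
    show "(\<one>\<^bsub>G\<lparr>carrier := B\<rparr>\<^esub>, \<one>\<^bsub>G\<lparr>carrier := B\<rparr>\<^esub>) \<in> R" using one by simp
    show "(\<one>\<^bsub>G\<lparr>carrier := B\<rparr>\<^esub>, k) \<in> R" using k by simp
  next
    fix a b c d assume "(a,b) \<in> R" "(c,d) \<in> R"
    then show "(a \<otimes>\<^bsub>G\<lparr>carrier := B\<rparr>\<^esub> c, b \<otimes>\<^bsub>G\<lparr>carrier := B\<rparr>\<^esub> d) \<in> R" using mul by simp
  next
    fix a b assume ab: "(a,b) \<in> R"
    then have "a \<in> B" "b \<in> B" using R by auto
    then show "(inv\<^bsub>G\<lparr>carrier := B\<rparr>\<^esub> a, inv\<^bsub>G\<lparr>carrier := B\<rparr>\<^esub> b) \<in> R"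
      using inv[OF ab] G.m_inv_consistent[OF sB] by simp
  next
    fix a assume "a \<in> carrier (G\<lparr>carrier := B\<rparr>)"
    then show "\<exists>b. (a,b) \<in> R" using tot by simp
  next
    fix x k assume "(x,k) \<in> R" "(\<one>\<^bsub>G\<lparr>carrier := B\<rparr>\<^esub>, k) \<in> R"
    then show "x = \<one>\<^bsub>G\<lparr>carrier := B\<rparr>\<^esub>" using inj by simp
  qed
  then show ?thesis by simp
qed

lemma core:
  assumes G: "comm_group G" and Q: "comm_group Q"
    and sB: "subgroup B G" and sD: "subgroup D G"
    and BD: "B <#>\<^bsub>G\<^esub> D = carrier G" and BDi: "B \<inter> D = {\<one>\<^bsub>G\<^esub>}"
    and Bas: "Bassian (G\<lparr>carrier := B\<rparr>)"
    and Dtor: "\<And>x. x \<in> D \<Longrightarrow> \<exists>n>0. x [^]\<^bsub>G\<^esub> (n::nat) = \<one>\<^bsub>G\<^esub>"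
    and Ddiv: "\<And>x n. x \<in> D \<Longrightarrow> (n::nat) > 0 \<Longrightarrow> \<exists>y\<in>D. y [^]\<^bsub>G\<^esub> n = x"
    and Dsoc: "\<And>p. Factorial_Ring.prime (p::nat) \<Longrightarrow> finite {x\<in>D. x [^]\<^bsub>G\<^esub> p = \<one>\<^bsub>G\<^esub>}"
    and pi: "\<pi> \<in> hom G Q" and pis: "\<pi> ` carrier G = carrier Q"
    and th: "\<theta> \<in> hom G Q" and thi: "inj_on \<theta> (carrier G)"
    and sC: "subgroup C Q" and AC: "(\<theta> ` carrier G) <#>\<^bsub>Q\<^esub> C = carrier Q"
    and ACi: "(\<theta> ` carrier G) \<inter> C = {\<one>\<^bsub>Q\<^esub>}" and Cne: "C \<noteq> {\<one>\<^bsub>Q\<^esub>}"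
  shows False
proof -
  interpret G: comm_group G by fact
  interpret Q: comm_group Q by fact
  interpret PI: group_hom G Q \<pi> using pi by (simp add: group_hom_def group_hom_axioms_def G.is_group Q.is_group)
  interpret TH: group_hom G Q \<theta> using th by (simp add: group_hom_def group_hom_axioms_def G.is_group Q.is_group)
  define A where "A = \<theta> ` carrier G"
  have sA: "subgroup A Q" unfolding A_def by (rule TH.img_is_subgroup)
  have Bc: "\<And>x. x \<in> B \<Longrightarrow> x \<in> carrier G" and Dc: "\<And>x. x \<in> D \<Longrightarrow> x \<in> carrier G"
    using sB sD subgroup.mem_carrier by metis+
  have Cc: "\<And>x. x \<in> C \<Longrightarrow> x \<in> carrier Q" using sC subgroup.mem_carrier by metis
  have B1: "\<one>\<^bsub>G\<^esub> \<in> B" and D1: "\<one>\<^bsub>G\<^esub> \<in> D" and C1: "\<one>\<^bsub>Q\<^esub> \<in> C"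
    using sB sD sC subgroup.one_closed by metis+
  have Bm: "\<And>x y. x \<in> B \<Longrightarrow> y \<in> B \<Longrightarrow> x \<otimes>\<^bsub>G\<^esub> y \<in> B" and Bi: "\<And>x. x \<in> B \<Longrightarrow> inv\<^bsub>G\<^esub> x \<in> B"
    using sB subgroup.m_closed subgroup.m_inv_closed by metis+
  have Dm: "\<And>x y. x \<in> D \<Longrightarrow> y \<in> D \<Longrightarrow> x \<otimes>\<^bsub>G\<^esub> y \<in> D" and Di: "\<And>x. x \<in> D \<Longrightarrow> inv\<^bsub>G\<^esub> x \<in> D"
    using sD subgroup.m_closed subgroup.m_inv_closed by metis+
  have Cm: "\<And>x y. x \<in> C \<Longrightarrow> y \<in> C \<Longrightarrow> x \<otimes>\<^bsub>Q\<^esub> y \<in> C" and Ci: "\<And>x. x \<in> C \<Longrightarrow> inv\<^bsub>Q\<^esub> x \<in> C"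
    using sC subgroup.m_closed subgroup.m_inv_closed by metis+
  have Dpow: "\<And>x n. x \<in> D \<Longrightarrow> x [^]\<^bsub>G\<^esub> (n::nat) \<in> D"
    using G.subgroup_int_pow_closed[OF sD] by (metis int_pow_int)
  have Cpow: "\<And>x n. x \<in> C \<Longrightarrow> x [^]\<^bsub>Q\<^esub> (n::nat) \<in> C"
    using Q.subgroup_int_pow_closed[OF sC] by (metis int_pow_int)
  have Bpow: "\<And>x n. x \<in> B \<Longrightarrow> x [^]\<^bsub>G\<^esub> (n::nat) \<in> B"
    using G.subgroup_int_pow_closed[OF sB] by (metis int_pow_int)
  have decG: "\<exists>b\<in>B. \<exists>d\<in>D. g = b \<otimes>\<^bsub>G\<^esub> d" if "g \<in> carrier G" for g
    using that BD by (simp add: G.set_mult_mem[symmetric])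
  have decQ: "\<exists>b\<in>B. \<exists>d\<in>D. \<exists>c\<in>C. q = \<theta> b \<otimes>\<^bsub>Q\<^esub> \<theta> d \<otimes>\<^bsub>Q\<^esub> c" if q: "q \<in> carrier Q" for q
  proof -
    have "q \<in> \<theta> ` carrier G <#>\<^bsub>Q\<^esub> C" using q AC by simp
    then obtain a c where ac: "a \<in> \<theta> ` carrier G" "c \<in> C" "q = a \<otimes>\<^bsub>Q\<^esub> c" unfolding Q.set_mult_mem by blast
    then obtain g where g: "g \<in> carrier G" "a = \<theta> g" by blast
    obtain b d where bd: "b \<in> B" "d \<in> D" "g = b \<otimes>\<^bsub>G\<^esub> d" using decG[OF g(1)] by blast
    have "q = \<theta> b \<otimes>\<^bsub>Q\<^esub> \<theta> d \<otimes>\<^bsub>Q\<^esub> c" using ac g bd Bc Dc by simp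
    then show ?thesis using bd ac by blast
  qed
  have concl: "x = \<one>\<^bsub>G\<^esub>" if x: "x \<in> B" and e: "e \<in> D" and c: "c \<in> C" and eq: "\<theta> x = \<theta> e \<otimes>\<^bsub>Q\<^esub> c" for x e c
  proof -
    have "\<theta> x \<otimes>\<^bsub>Q\<^esub> \<one>\<^bsub>Q\<^esub> = \<theta> e \<otimes>\<^bsub>Q\<^esub> c" using eq x e c Bc Dc Cc by simp
    moreover have m: "\<theta> x \<in> A" "\<theta> e \<in> A" using x e Bc Dc by (auto simp: A_def)
    ultimately have "\<theta> x = \<theta> e" using Q.dec_unique[OF sA sC ACi[folded A_def] m(1) C1 m(2) c] by blast
    then have "x = e" using thi x e Bc Dc by (auto dest: inj_onD)
    then show ?thesis using x e BDi by auto
  qed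
  have uniq1: "b = b2" if "b \<in> B" "b2 \<in> B" "d \<in> D" "d2 \<in> D" "c \<in> C" "c2 \<in> C"
    and eq: "\<theta> b \<otimes>\<^bsub>Q\<^esub> \<theta> d \<otimes>\<^bsub>Q\<^esub> c = \<theta> b2 \<otimes>\<^bsub>Q\<^esub> \<theta> d2 \<otimes>\<^bsub>Q\<^esub> c2" for b b2 d d2 c c2
  proof -
    have "\<theta> (b \<otimes>\<^bsub>G\<^esub> d) \<otimes>\<^bsub>Q\<^esub> c = \<theta> (b2 \<otimes>\<^bsub>G\<^esub> d2) \<otimes>\<^bsub>Q\<^esub> c2" using eq that Bc Dc by simp
    moreover have "\<theta> (b \<otimes>\<^bsub>G\<^esub> d) \<in> A" "\<theta> (b2 \<otimes>\<^bsub>G\<^esub> d2) \<in> A" unfolding A_def using that Bc Dc by (intro imageI G.m_closed; simp)+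
    ultimately have ee: "\<theta> (b \<otimes>\<^bsub>G\<^esub> d) = \<theta> (b2 \<otimes>\<^bsub>G\<^esub> d2)" using Q.dec_unique[OF sA sC ACi[folded A_def]] that by blast
    have "b \<otimes>\<^bsub>G\<^esub> d = b2 \<otimes>\<^bsub>G\<^esub> d2" by (rule inj_onD[OF thi ee]) (use that Bc Dc in simp_all)
    then show ?thesis using G.dec_unique[OF sB sD BDi] that by blast
  qed
  have noDT: "x = \<one>\<^bsub>G\<^esub>" if "subgroup P G" "P \<subseteq> B"
      "\<And>x n. x \<in> P \<Longrightarrow> (n::nat) > 0 \<Longrightarrow> \<exists>y\<in>P. y [^]\<^bsub>G\<^esub> n = x"
      "\<And>x. x \<in> P \<Longrightarrow> \<exists>n>0. x [^]\<^bsub>G\<^esub> (n::nat) = \<one>\<^bsub>G\<^esub>" "x \<in> P" for P x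
    using bassian_sub_noDT[OF G sB Bas that] .
  define W where "W = \<theta> ` D <#>\<^bsub>Q\<^esub> C"
  have sW: "subgroup W Q" unfolding W_def using Q.subgroup_set_mult TH.subgroup_img_is_subgroup[OF sD] sC by blast
  have thDW: "\<theta> d \<in> W" if "d \<in> D" for d
  proof -
    have "\<theta> d = \<theta> d \<otimes>\<^bsub>Q\<^esub> \<one>\<^bsub>Q\<^esub>" using that Dc by simp
    then show ?thesis unfolding W_def Q.set_mult_mem using that C1 by blast
  qed
  have CW: "c \<in> W" if "c \<in> C" for c
  proof -
    have "c = \<theta> \<one>\<^bsub>G\<^esub> \<otimes>\<^bsub>Q\<^esub> c" using that Cc by simp
    then show ?thesis unfolding W_def Q.set_mult_mem using that D1 by blast
  qed
  have Wdec: "\<exists>e\<in>D. \<exists>c\<in>C. w = \<theta> e \<otimes>\<^bsub>Q\<^esub> c" if "w \<in> W" for w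
    using that unfolding W_def Q.set_mult_mem by blast
  have concl2: "x = \<one>\<^bsub>G\<^esub>" if "x \<in> B" "\<theta> x \<in> W" for x
    using that Wdec concl by blast
  define P2 where "P2 = {b\<in>B. \<exists>d\<in>D. \<exists>d'\<in>D. \<exists>c\<in>C. \<pi> d = \<theta> b \<otimes>\<^bsub>Q\<^esub> \<theta> d' \<otimes>\<^bsub>Q\<^esub> c}"
  have P2B: "P2 \<subseteq> B" by (auto simp: P2_def)
  have sP2: "subgroup P2 G"
  proof (rule G.subgroupI)
    show "P2 \<subseteq> carrier G" using Bc by (auto simp: P2_def)
    have "\<pi> \<one>\<^bsub>G\<^esub> = \<theta> \<one>\<^bsub>G\<^esub> \<otimes>\<^bsub>Q\<^esub> \<theta> \<one>\<^bsub>G\<^esub> \<otimes>\<^bsub>Q\<^esub> \<one>\<^bsub>Q\<^esub>" by simp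
    then have "\<one>\<^bsub>G\<^esub> \<in> P2" unfolding P2_def using B1 D1 C1 by blast
    then show "P2 \<noteq> {}" by blast
  next
    fix a assume "a \<in> P2"
    then obtain d d' c where w: "a \<in> B" "d \<in> D" "d' \<in> D" "c \<in> C" "\<pi> d = \<theta> a \<otimes>\<^bsub>Q\<^esub> \<theta> d' \<otimes>\<^bsub>Q\<^esub> c"
      by (auto simp: P2_def)
    have "\<pi> (inv\<^bsub>G\<^esub> d) = inv\<^bsub>Q\<^esub> (\<theta> a \<otimes>\<^bsub>Q\<^esub> \<theta> d' \<otimes>\<^bsub>Q\<^esub> c)" using w Dc by simp
    also have "\<dots> = \<theta> (inv\<^bsub>G\<^esub> a) \<otimes>\<^bsub>Q\<^esub> \<theta> (inv\<^bsub>G\<^esub> d') \<otimes>\<^bsub>Q\<^esub> inv\<^bsub>Q\<^esub> c"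
      using w Bc Dc Cc by (simp add: Q.inv_mult)
    finally show "inv\<^bsub>G\<^esub> a \<in> P2" unfolding P2_def using w Bi Di Ci by blast
  next
    fix a b assume "a \<in> P2" "b \<in> P2"
    then obtain d d' c e e' c' where w: "a \<in> B" "d \<in> D" "d' \<in> D" "c \<in> C" "\<pi> d = \<theta> a \<otimes>\<^bsub>Q\<^esub> \<theta> d' \<otimes>\<^bsub>Q\<^esub> c"
      "b \<in> B" "e \<in> D" "e' \<in> D" "c' \<in> C" "\<pi> e = \<theta> b \<otimes>\<^bsub>Q\<^esub> \<theta> e' \<otimes>\<^bsub>Q\<^esub> c'"
      by (auto simp: P2_def)
    have "\<pi> (d \<otimes>\<^bsub>G\<^esub> e) = (\<theta> a \<otimes>\<^bsub>Q\<^esub> \<theta> d' \<otimes>\<^bsub>Q\<^esub> c) \<otimes>\<^bsub>Q\<^esub> (\<theta> b \<otimes>\<^bsub>Q\<^esub> \<theta> e' \<otimes>\<^bsub>Q\<^esub> c')"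
      using w Dc by simp
    also have "\<dots> = \<theta> (a \<otimes>\<^bsub>G\<^esub> b) \<otimes>\<^bsub>Q\<^esub> \<theta> (d' \<otimes>\<^bsub>G\<^esub> e') \<otimes>\<^bsub>Q\<^esub> (c \<otimes>\<^bsub>Q\<^esub> c')"
      using w Bc Dc Cc by (simp add: Q.m_ac)
    finally show "a \<otimes>\<^bsub>G\<^esub> b \<in> P2" unfolding P2_def using w Bm Dm Cm by blast
  qed
  have P2triv: "x = \<one>\<^bsub>G\<^esub>" if "x \<in> P2" for x
  proof (rule noDT[OF sP2 P2B _ _ that])
    fix b n assume b: "b \<in> P2" and n: "(n::nat) > 0"
    then obtain d d' c where w: "b \<in> B" "d \<in> D" "d' \<in> D" "c \<in> C" "\<pi> d = \<theta> b \<otimes>\<^bsub>Q\<^esub> \<theta> d' \<otimes>\<^bsub>Q\<^esub> c"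
      by (auto simp: P2_def)
    obtain e where e: "e \<in> D" "e [^]\<^bsub>G\<^esub> n = d" using Ddiv[OF w(2) n] by blast
    obtain b1 d1 c1 where w1: "b1 \<in> B" "d1 \<in> D" "c1 \<in> C" "\<pi> e = \<theta> b1 \<otimes>\<^bsub>Q\<^esub> \<theta> d1 \<otimes>\<^bsub>Q\<^esub> c1"
      using decQ[of "\<pi> e"] e Dc by auto
    have b1P: "b1 \<in> P2" unfolding P2_def using w1 e by blast
    have "\<pi> d = (\<pi> e) [^]\<^bsub>Q\<^esub> n" using e Dc by (simp add: PI.hom_nat_pow[symmetric])
    also have "\<dots> = \<theta> (b1 [^]\<^bsub>G\<^esub> n) \<otimes>\<^bsub>Q\<^esub> \<theta> (d1 [^]\<^bsub>G\<^esub> n) \<otimes>\<^bsub>Q\<^esub> c1 [^]\<^bsub>Q\<^esub> n"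
      using w1 Bc Dc Cc by (simp add: Q.nat_pow_distrib TH.hom_nat_pow)
    finally have "b = b1 [^]\<^bsub>G\<^esub> n" using uniq1[of b "b1 [^]\<^bsub>G\<^esub> n" d' "d1 [^]\<^bsub>G\<^esub> n" c "c1 [^]\<^bsub>Q\<^esub> n"] w w1 Bpow Dpow Cpow
      by metis
    then show "\<exists>y\<in>P2. y [^]\<^bsub>G\<^esub> n = b" using b1P by blast
  next
    fix b assume b: "b \<in> P2"
    then obtain d d' c where w: "b \<in> B" "d \<in> D" "d' \<in> D" "c \<in> C" "\<pi> d = \<theta> b \<otimes>\<^bsub>Q\<^esub> \<theta> d' \<otimes>\<^bsub>Q\<^esub> c"
      by (auto simp: P2_def)
    obtain n where n: "n > 0" "d [^]\<^bsub>G\<^esub> (n::nat) = \<one>\<^bsub>G\<^esub>" using Dtor[OF w(2)] by blast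
    have "\<theta> (b [^]\<^bsub>G\<^esub> n) \<otimes>\<^bsub>Q\<^esub> \<theta> (d' [^]\<^bsub>G\<^esub> n) \<otimes>\<^bsub>Q\<^esub> c [^]\<^bsub>Q\<^esub> n = (\<pi> d) [^]\<^bsub>Q\<^esub> n"
      using w Bc Dc Cc by (simp add: Q.nat_pow_distrib TH.hom_nat_pow)
    also have "\<dots> = \<theta> \<one>\<^bsub>G\<^esub> \<otimes>\<^bsub>Q\<^esub> \<theta> \<one>\<^bsub>G\<^esub> \<otimes>\<^bsub>Q\<^esub> \<one>\<^bsub>Q\<^esub>" using n(2) w(2) Dc by (simp add: PI.hom_nat_pow[symmetric])
    finally have "b [^]\<^bsub>G\<^esub> n = \<one>\<^bsub>G\<^esub>" using uniq1[of "b [^]\<^bsub>G\<^esub> n" "\<one>\<^bsub>G\<^esub>" "d' [^]\<^bsub>G\<^esub> n" "\<one>\<^bsub>G\<^esub>" "c [^]\<^bsub>Q\<^esub> n" "\<one>\<^bsub>Q\<^esub>"] w B1 D1 C1 Bpow Dpow Cpow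
      by metis
    then show "\<exists>n>0. b [^]\<^bsub>G\<^esub> (n::nat) = \<one>\<^bsub>G\<^esub>" using n by blast
  qed
  have F3: "\<pi> d \<in> W" if d: "d \<in> D" for d
  proof -
    obtain b d' c where w: "b \<in> B" "d' \<in> D" "c \<in> C" "\<pi> d = \<theta> b \<otimes>\<^bsub>Q\<^esub> \<theta> d' \<otimes>\<^bsub>Q\<^esub> c"
      using decQ[of "\<pi> d"] d Dc by auto
    have "b \<in> P2" unfolding P2_def using w d by blast
    then have "b = \<one>\<^bsub>G\<^esub>" using P2triv by blast
    then have "\<pi> d = \<theta> d' \<otimes>\<^bsub>Q\<^esub> c" using w Dc Cc by simp
    then show ?thesis unfolding W_def Q.set_mult_mem using w by blast
  qed
  have Wm: "\<And>x y. x \<in> W \<Longrightarrow> y \<in> W \<Longrightarrow> x \<otimes>\<^bsub>Q\<^esub> y \<in> W" and Wi: "\<And>x. x \<in> W \<Longrightarrow> inv\<^bsub>Q\<^esub> x \<in> W"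
    using sW subgroup.m_closed subgroup.m_inv_closed by metis+
  have Wc: "\<And>x. x \<in> W \<Longrightarrow> x \<in> carrier Q" using sW subgroup.mem_carrier by metis
  have piD: "\<And>d. d \<in> D \<Longrightarrow> \<pi> d \<in> carrier Q" and thD: "\<And>d. d \<in> D \<Longrightarrow> \<theta> d \<in> carrier Q"
    and piB: "\<And>d. d \<in> B \<Longrightarrow> \<pi> d \<in> carrier Q" and thB: "\<And>d. d \<in> B \<Longrightarrow> \<theta> d \<in> carrier Q"
    using Dc Bc by simp_all
  show False
  proof (cases "\<exists>g\<in>carrier G. \<pi> g = \<one>\<^bsub>Q\<^esub> \<and> g \<notin> D")
    case True
    then obtain g where g: "g \<in> carrier G" "\<pi> g = \<one>\<^bsub>Q\<^esub>" "g \<notin> D" by blast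
    define R1 where "R1 = {(b,b'). b \<in> B \<and> b' \<in> B \<and> (\<exists>d\<in>D. \<exists>d'\<in>D. \<pi> b' \<otimes>\<^bsub>Q\<^esub> \<pi> d = \<theta> b \<otimes>\<^bsub>Q\<^esub> \<theta> d')}"
    obtain b' d where bd: "b' \<in> B" "d \<in> D" "g = b' \<otimes>\<^bsub>G\<^esub> d" using decG[OF g(1)] by blast
    have k: "(\<one>\<^bsub>G\<^esub>, b') \<in> R1"
    proof -
      have "\<pi> b' \<otimes>\<^bsub>Q\<^esub> \<pi> d = \<pi> g" using bd Bc Dc by simp
      also have "\<dots> = \<theta> \<one>\<^bsub>G\<^esub> \<otimes>\<^bsub>Q\<^esub> \<theta> \<one>\<^bsub>G\<^esub>" using g(2) by simp
      finally show ?thesis unfolding R1_def using B1 bd D1 by blast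
    qed
    have "b' = \<one>\<^bsub>G\<^esub>"
    proof (rule bassian_sub_rel[OF G sB Bas, of R1])
      show "R1 \<subseteq> B \<times> B" by (auto simp: R1_def)
      have "\<pi> \<one>\<^bsub>G\<^esub> \<otimes>\<^bsub>Q\<^esub> \<pi> \<one>\<^bsub>G\<^esub> = \<theta> \<one>\<^bsub>G\<^esub> \<otimes>\<^bsub>Q\<^esub> \<theta> \<one>\<^bsub>G\<^esub>" by simp
      then show "(\<one>\<^bsub>G\<^esub>, \<one>\<^bsub>G\<^esub>) \<in> R1" unfolding R1_def using B1 D1 by blast
      show "(\<one>\<^bsub>G\<^esub>, b') \<in> R1" by (rule k)
    next
      fix a b c e assume "(a,b) \<in> R1" "(c,e) \<in> R1"
      then obtain d1 d1' d2 d2' where w: "a \<in> B" "b \<in> B" "d1 \<in> D" "d1' \<in> D" "\<pi> b \<otimes>\<^bsub>Q\<^esub> \<pi> d1 = \<theta> a \<otimes>\<^bsub>Q\<^esub> \<theta> d1'"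
        "c \<in> B" "e \<in> B" "d2 \<in> D" "d2' \<in> D" "\<pi> e \<otimes>\<^bsub>Q\<^esub> \<pi> d2 = \<theta> c \<otimes>\<^bsub>Q\<^esub> \<theta> d2'"
        by (auto simp: R1_def)
      have "\<pi> (b \<otimes>\<^bsub>G\<^esub> e) \<otimes>\<^bsub>Q\<^esub> \<pi> (d1 \<otimes>\<^bsub>G\<^esub> d2) = (\<pi> b \<otimes>\<^bsub>Q\<^esub> \<pi> d1) \<otimes>\<^bsub>Q\<^esub> (\<pi> e \<otimes>\<^bsub>Q\<^esub> \<pi> d2)"
        using w(2) w(7) w(3) w(8) Bc Dc by (simp add: Q.m_ac)
      also have "\<dots> = (\<theta> a \<otimes>\<^bsub>Q\<^esub> \<theta> d1') \<otimes>\<^bsub>Q\<^esub> (\<theta> c \<otimes>\<^bsub>Q\<^esub> \<theta> d2')" by (simp only: w(5) w(10))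
      also have "\<dots> = \<theta> (a \<otimes>\<^bsub>G\<^esub> c) \<otimes>\<^bsub>Q\<^esub> \<theta> (d1' \<otimes>\<^bsub>G\<^esub> d2')" using w(1) w(6) w(4) w(9) Bc Dc by (simp add: Q.m_ac)
      finally show "(a \<otimes>\<^bsub>G\<^esub> c, b \<otimes>\<^bsub>G\<^esub> e) \<in> R1" unfolding R1_def using w Bm Dm by blast
    next
      fix a b assume "(a,b) \<in> R1"
      then obtain d1 d1' where w: "a \<in> B" "b \<in> B" "d1 \<in> D" "d1' \<in> D" "\<pi> b \<otimes>\<^bsub>Q\<^esub> \<pi> d1 = \<theta> a \<otimes>\<^bsub>Q\<^esub> \<theta> d1'"
        by (auto simp: R1_def)
      have "\<pi> (inv\<^bsub>G\<^esub> b) \<otimes>\<^bsub>Q\<^esub> \<pi> (inv\<^bsub>G\<^esub> d1) = inv\<^bsub>Q\<^esub> (\<pi> b \<otimes>\<^bsub>Q\<^esub> \<pi> d1)"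
        using w(2) w(3) Bc Dc by (simp add: Q.inv_mult)
      also have "\<dots> = inv\<^bsub>Q\<^esub> (\<theta> a \<otimes>\<^bsub>Q\<^esub> \<theta> d1')" by (simp only: w(5))
      also have "\<dots> = \<theta> (inv\<^bsub>G\<^esub> a) \<otimes>\<^bsub>Q\<^esub> \<theta> (inv\<^bsub>G\<^esub> d1')" using w(1) w(4) Bc Dc by (simp add: Q.inv_mult)
      finally show "(inv\<^bsub>G\<^esub> a, inv\<^bsub>G\<^esub> b) \<in> R1" unfolding R1_def using w Bi Di by blast
    next
      fix a assume a: "a \<in> B"
      then have "\<theta> a \<in> \<pi> ` carrier G" using pis Bc by simp
      then obtain g0 where g0: "g0 \<in> carrier G" "\<theta> a = \<pi> g0" by blast
      obtain b0 d0 where bd0: "b0 \<in> B" "d0 \<in> D" "g0 = b0 \<otimes>\<^bsub>G\<^esub> d0" using decG[OF g0(1)] by blast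
      have "\<pi> b0 \<otimes>\<^bsub>Q\<^esub> \<pi> d0 = \<theta> a \<otimes>\<^bsub>Q\<^esub> \<theta> \<one>\<^bsub>G\<^esub>" using g0 bd0 a Bc Dc by simp
      then show "\<exists>b. (a,b) \<in> R1" unfolding R1_def using a bd0 D1 by blast
    next
      fix x k assume "(x,k) \<in> R1" "(\<one>\<^bsub>G\<^esub>,k) \<in> R1"
      then obtain d1 d1' d2 d2' where w: "x \<in> B" "k \<in> B" "d1 \<in> D" "d1' \<in> D" "\<pi> k \<otimes>\<^bsub>Q\<^esub> \<pi> d1 = \<theta> x \<otimes>\<^bsub>Q\<^esub> \<theta> d1'"
        "d2 \<in> D" "d2' \<in> D" "\<pi> k \<otimes>\<^bsub>Q\<^esub> \<pi> d2 = \<theta> \<one>\<^bsub>G\<^esub> \<otimes>\<^bsub>Q\<^esub> \<theta> d2'"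
        by (auto simp: R1_def)
      have "\<pi> k \<otimes>\<^bsub>Q\<^esub> \<pi> d2 = \<theta> d2'" using w(8) w(7) Dc by simp
      then have "\<pi> k = \<theta> d2' \<otimes>\<^bsub>Q\<^esub> inv\<^bsub>Q\<^esub> (\<pi> d2)" using w Bc Dc by (simp add: Q.inv_solve_right)
      then have uW: "\<pi> k \<in> W" using thDW[OF w(7)] F3[OF w(6)] Wm Wi by simp
      have "\<theta> x = (\<pi> k \<otimes>\<^bsub>Q\<^esub> \<pi> d1) \<otimes>\<^bsub>Q\<^esub> inv\<^bsub>Q\<^esub> (\<theta> d1')" using w(5) w Bc Dc by (simp add: Q.inv_solve_right)
      then have "\<theta> x \<in> W" using uW F3[OF w(3)] thDW[OF w(4)] Wm Wi by simp
      then show "x = \<one>\<^bsub>G\<^esub>" using concl2 w(1) by blast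
    qed
    then show False using bd g Dc by simp
  next
    case notc1: False
    show False
    proof (cases "C \<subseteq> \<pi> ` D")
      case False
      then obtain c0 where c0: "c0 \<in> C" "c0 \<notin> \<pi> ` D" by blast
      define R2 where "R2 = {(b,b'). b \<in> B \<and> b' \<in> B \<and> (\<exists>d\<in>D. \<exists>c\<in>C. \<theta> b \<otimes>\<^bsub>Q\<^esub> c = \<pi> b' \<otimes>\<^bsub>Q\<^esub> \<pi> d)}"
      have "c0 \<in> \<pi> ` carrier G" using pis c0 Cc by simp
      then obtain g0 where g0: "g0 \<in> carrier G" "c0 = \<pi> g0" by blast
      obtain b' d where bd: "b' \<in> B" "d \<in> D" "g0 = b' \<otimes>\<^bsub>G\<^esub> d" using decG[OF g0(1)] by blast
      have k: "(\<one>\<^bsub>G\<^esub>, b') \<in> R2"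
      proof -
        have "\<theta> \<one>\<^bsub>G\<^esub> \<otimes>\<^bsub>Q\<^esub> c0 = \<pi> b' \<otimes>\<^bsub>Q\<^esub> \<pi> d" using g0 bd Bc Dc c0 Cc by simp
        then show ?thesis unfolding R2_def using B1 bd c0 by blast
      qed
      have "b' = \<one>\<^bsub>G\<^esub>"
      proof (rule bassian_sub_rel[OF G sB Bas, of R2])
        show "R2 \<subseteq> B \<times> B" by (auto simp: R2_def)
        have "\<theta> \<one>\<^bsub>G\<^esub> \<otimes>\<^bsub>Q\<^esub> \<one>\<^bsub>Q\<^esub> = \<pi> \<one>\<^bsub>G\<^esub> \<otimes>\<^bsub>Q\<^esub> \<pi> \<one>\<^bsub>G\<^esub>" by simp
        then show "(\<one>\<^bsub>G\<^esub>, \<one>\<^bsub>G\<^esub>) \<in> R2" unfolding R2_def using B1 D1 C1 by blast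
        show "(\<one>\<^bsub>G\<^esub>, b') \<in> R2" by (rule k)
      next
        fix a b c e assume "(a,b) \<in> R2" "(c,e) \<in> R2"
        then obtain d1 c1 d2 c2 where w: "a \<in> B" "b \<in> B" "d1 \<in> D" "c1 \<in> C" "\<theta> a \<otimes>\<^bsub>Q\<^esub> c1 = \<pi> b \<otimes>\<^bsub>Q\<^esub> \<pi> d1"
          "c \<in> B" "e \<in> B" "d2 \<in> D" "c2 \<in> C" "\<theta> c \<otimes>\<^bsub>Q\<^esub> c2 = \<pi> e \<otimes>\<^bsub>Q\<^esub> \<pi> d2"
          by (auto simp: R2_def)
        have "\<theta> (a \<otimes>\<^bsub>G\<^esub> c) \<otimes>\<^bsub>Q\<^esub> (c1 \<otimes>\<^bsub>Q\<^esub> c2) = (\<theta> a \<otimes>\<^bsub>Q\<^esub> c1) \<otimes>\<^bsub>Q\<^esub> (\<theta> c \<otimes>\<^bsub>Q\<^esub> c2)"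
          using w(1) w(6) w(4) w(9) Bc Cc by (simp add: Q.m_ac)
        also have "\<dots> = (\<pi> b \<otimes>\<^bsub>Q\<^esub> \<pi> d1) \<otimes>\<^bsub>Q\<^esub> (\<pi> e \<otimes>\<^bsub>Q\<^esub> \<pi> d2)" by (simp only: w(5) w(10))
        also have "\<dots> = \<pi> (b \<otimes>\<^bsub>G\<^esub> e) \<otimes>\<^bsub>Q\<^esub> \<pi> (d1 \<otimes>\<^bsub>G\<^esub> d2)" using w(2) w(7) w(3) w(8) Bc Dc by (simp add: Q.m_ac)
        finally show "(a \<otimes>\<^bsub>G\<^esub> c, b \<otimes>\<^bsub>G\<^esub> e) \<in> R2" unfolding R2_def using w Bm Dm Cm by blast
      next
        fix a b assume "(a,b) \<in> R2"
        then obtain d1 c1 where w: "a \<in> B" "b \<in> B" "d1 \<in> D" "c1 \<in> C" "\<theta> a \<otimes>\<^bsub>Q\<^esub> c1 = \<pi> b \<otimes>\<^bsub>Q\<^esub> \<pi> d1"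
          by (auto simp: R2_def)
        have "\<theta> (inv\<^bsub>G\<^esub> a) \<otimes>\<^bsub>Q\<^esub> inv\<^bsub>Q\<^esub> c1 = inv\<^bsub>Q\<^esub> (\<theta> a \<otimes>\<^bsub>Q\<^esub> c1)"
          using w(1) w(4) Bc Cc by (simp add: Q.inv_mult)
        also have "\<dots> = inv\<^bsub>Q\<^esub> (\<pi> b \<otimes>\<^bsub>Q\<^esub> \<pi> d1)" by (simp only: w(5))
        also have "\<dots> = \<pi> (inv\<^bsub>G\<^esub> b) \<otimes>\<^bsub>Q\<^esub> \<pi> (inv\<^bsub>G\<^esub> d1)" using w(2) w(3) Bc Dc by (simp add: Q.inv_mult)
        finally show "(inv\<^bsub>G\<^esub> a, inv\<^bsub>G\<^esub> b) \<in> R2" unfolding R2_def using w Bi Di Ci by blast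
      next
        fix a assume a: "a \<in> B"
        then have "\<theta> a \<in> \<pi> ` carrier G" using pis Bc by simp
        then obtain g1 where g1: "g1 \<in> carrier G" "\<theta> a = \<pi> g1" by blast
        obtain b1 d1 where bd1: "b1 \<in> B" "d1 \<in> D" "g1 = b1 \<otimes>\<^bsub>G\<^esub> d1" using decG[OF g1(1)] by blast
        have "\<theta> a \<otimes>\<^bsub>Q\<^esub> \<one>\<^bsub>Q\<^esub> = \<pi> b1 \<otimes>\<^bsub>Q\<^esub> \<pi> d1" using g1 bd1 a Bc Dc by simp
        then show "\<exists>b. (a,b) \<in> R2" unfolding R2_def using a bd1 C1 by blast
      next
        fix x k assume "(x,k) \<in> R2" "(\<one>\<^bsub>G\<^esub>,k) \<in> R2"
        then obtain d1 c1 d2 c2 where w: "x \<in> B" "k \<in> B" "d1 \<in> D" "c1 \<in> C" "\<theta> x \<otimes>\<^bsub>Q\<^esub> c1 = \<pi> k \<otimes>\<^bsub>Q\<^esub> \<pi> d1"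
          "d2 \<in> D" "c2 \<in> C" "\<theta> \<one>\<^bsub>G\<^esub> \<otimes>\<^bsub>Q\<^esub> c2 = \<pi> k \<otimes>\<^bsub>Q\<^esub> \<pi> d2"
          by (auto simp: R2_def)
        have "c2 = \<pi> k \<otimes>\<^bsub>Q\<^esub> \<pi> d2" using w(8) w(7) Cc by simp
        then have "\<pi> k = c2 \<otimes>\<^bsub>Q\<^esub> inv\<^bsub>Q\<^esub> (\<pi> d2)" using w Bc Dc Cc by (simp add: Q.inv_solve_right)
        then have uW: "\<pi> k \<in> W" using CW[OF w(7)] F3[OF w(6)] Wm Wi by simp
        have "\<theta> x = (\<pi> k \<otimes>\<^bsub>Q\<^esub> \<pi> d1) \<otimes>\<^bsub>Q\<^esub> inv\<^bsub>Q\<^esub> c1" using w(5) w Bc Dc Cc by (simp add: Q.inv_solve_right)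
        then have "\<theta> x \<in> W" using uW F3[OF w(3)] CW[OF w(4)] Wm Wi by simp
        then show "x = \<one>\<^bsub>G\<^esub>" using concl2 w(1) by blast
      qed
      then have "c0 = \<pi> d" using g0 bd Dc by simp
      then show False using c0 bd by blast
    next
      case CPD: True
      have HD: "g \<in> D" if "g \<in> carrier G" "\<pi> g = \<one>\<^bsub>Q\<^esub>" for g using notc1 that by blast
      have uniq2: "b = b2" if "b \<in> B" "b2 \<in> B" "d \<in> D" "d2 \<in> D" and eq: "\<pi> b \<otimes>\<^bsub>Q\<^esub> \<pi> d = \<pi> b2 \<otimes>\<^bsub>Q\<^esub> \<pi> d2" for b b2 d d2
      proof -
        have c: "b \<in> carrier G" "b2 \<in> carrier G" "d \<in> carrier G" "d2 \<in> carrier G" using that Bc Dc by auto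
        have "\<pi> b \<otimes>\<^bsub>Q\<^esub> inv\<^bsub>Q\<^esub> (\<pi> b2) = \<pi> d2 \<otimes>\<^bsub>Q\<^esub> inv\<^bsub>Q\<^esub> (\<pi> d)"
          using Q.swap_eq[OF _ _ _ _ eq] c by simp
        then have e1: "\<pi> (b \<otimes>\<^bsub>G\<^esub> inv\<^bsub>G\<^esub> b2) = \<pi> (d2 \<otimes>\<^bsub>G\<^esub> inv\<^bsub>G\<^esub> d)" using c by simp
        define w where "w = (b \<otimes>\<^bsub>G\<^esub> inv\<^bsub>G\<^esub> b2) \<otimes>\<^bsub>G\<^esub> inv\<^bsub>G\<^esub> (d2 \<otimes>\<^bsub>G\<^esub> inv\<^bsub>G\<^esub> d)"
        have wc: "w \<in> carrier G" using c by (simp add: w_def)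
        have "\<pi> w = \<one>\<^bsub>Q\<^esub>" using c e1 by (simp add: w_def)
        then have wD: "w \<in> D" using HD wc by blast
        have Xc: "b \<otimes>\<^bsub>G\<^esub> inv\<^bsub>G\<^esub> b2 \<in> carrier G" and Yc: "d2 \<otimes>\<^bsub>G\<^esub> inv\<^bsub>G\<^esub> d \<in> carrier G" using c by simp_all
        have wX: "w = (b \<otimes>\<^bsub>G\<^esub> inv\<^bsub>G\<^esub> b2) \<otimes>\<^bsub>G\<^esub> inv\<^bsub>G\<^esub> (d2 \<otimes>\<^bsub>G\<^esub> inv\<^bsub>G\<^esub> d)" by (simp add: w_def)
        have "b \<otimes>\<^bsub>G\<^esub> inv\<^bsub>G\<^esub> b2 = w \<otimes>\<^bsub>G\<^esub> (d2 \<otimes>\<^bsub>G\<^esub> inv\<^bsub>G\<^esub> d)"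
          using iffD1[OF G.inv_solve_right[OF wc Xc Yc] wX] .
        then have "b \<otimes>\<^bsub>G\<^esub> inv\<^bsub>G\<^esub> b2 \<in> D" using wD that Dm Di by simp
        moreover have "b \<otimes>\<^bsub>G\<^esub> inv\<^bsub>G\<^esub> b2 \<in> B" using that Bm Bi by simp
        ultimately have "b \<otimes>\<^bsub>G\<^esub> inv\<^bsub>G\<^esub> b2 = \<one>\<^bsub>G\<^esub>" using BDi by auto
        then show ?thesis using c by (metis G.inv_solve_right G.l_one G.one_closed)
      qed
      have decP: "\<exists>b\<in>B. \<exists>d\<in>D. q = \<pi> b \<otimes>\<^bsub>Q\<^esub> \<pi> d" if q: "q \<in> carrier Q" for q
      proof -
        obtain g where g: "g \<in> carrier G" "q = \<pi> g" using q pis by blast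
        obtain b d where bd: "b \<in> B" "d \<in> D" "g = b \<otimes>\<^bsub>G\<^esub> d" using decG[OF g(1)] by blast
        show ?thesis using g bd Bc Dc by auto
      qed
      define P3 where "P3 = {b\<in>B. \<exists>d\<in>D. \<exists>d'\<in>D. \<theta> d = \<pi> b \<otimes>\<^bsub>Q\<^esub> \<pi> d'}"
      have sP3: "subgroup P3 G"
      proof (rule G.subgroupI)
        show "P3 \<subseteq> carrier G" using Bc by (auto simp: P3_def)
        have "\<theta> \<one>\<^bsub>G\<^esub> = \<pi> \<one>\<^bsub>G\<^esub> \<otimes>\<^bsub>Q\<^esub> \<pi> \<one>\<^bsub>G\<^esub>" by simp
        then have "\<one>\<^bsub>G\<^esub> \<in> P3" unfolding P3_def using B1 D1 by blast
        then show "P3 \<noteq> {}" by blast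
      next
        fix a assume "a \<in> P3"
        then obtain d d' where w: "a \<in> B" "d \<in> D" "d' \<in> D" "\<theta> d = \<pi> a \<otimes>\<^bsub>Q\<^esub> \<pi> d'" by (auto simp: P3_def)
        have "\<theta> (inv\<^bsub>G\<^esub> d) = inv\<^bsub>Q\<^esub> (\<pi> a \<otimes>\<^bsub>Q\<^esub> \<pi> d')" using w Dc by simp
        also have "\<dots> = \<pi> (inv\<^bsub>G\<^esub> a) \<otimes>\<^bsub>Q\<^esub> \<pi> (inv\<^bsub>G\<^esub> d')" using w(1) w(3) Bc Dc by (simp add: Q.inv_mult)
        finally show "inv\<^bsub>G\<^esub> a \<in> P3" unfolding P3_def using w Bi Di by blast
      next
        fix a b assume "a \<in> P3" "b \<in> P3"
        then obtain d d' e e' where w: "a \<in> B" "d \<in> D" "d' \<in> D" "\<theta> d = \<pi> a \<otimes>\<^bsub>Q\<^esub> \<pi> d'"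
          "b \<in> B" "e \<in> D" "e' \<in> D" "\<theta> e = \<pi> b \<otimes>\<^bsub>Q\<^esub> \<pi> e'" by (auto simp: P3_def)
        have "\<theta> (d \<otimes>\<^bsub>G\<^esub> e) = (\<pi> a \<otimes>\<^bsub>Q\<^esub> \<pi> d') \<otimes>\<^bsub>Q\<^esub> (\<pi> b \<otimes>\<^bsub>Q\<^esub> \<pi> e')" using w Dc by simp
        also have "\<dots> = \<pi> (a \<otimes>\<^bsub>G\<^esub> b) \<otimes>\<^bsub>Q\<^esub> \<pi> (d' \<otimes>\<^bsub>G\<^esub> e')" using w(1) w(3) w(5) w(7) Bc Dc by (simp add: Q.m_ac)
        finally show "a \<otimes>\<^bsub>G\<^esub> b \<in> P3" unfolding P3_def using w Bm Dm by blast
      qed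
      have P3triv: "x = \<one>\<^bsub>G\<^esub>" if "x \<in> P3" for x
      proof (rule noDT[OF sP3 _ _ _ that])
        show "P3 \<subseteq> B" by (auto simp: P3_def)
      next
        fix b n assume b: "b \<in> P3" and n: "(n::nat) > 0"
        then obtain d d' where w: "b \<in> B" "d \<in> D" "d' \<in> D" "\<theta> d = \<pi> b \<otimes>\<^bsub>Q\<^esub> \<pi> d'" by (auto simp: P3_def)
        obtain e where e: "e \<in> D" "e [^]\<^bsub>G\<^esub> n = d" using Ddiv[OF w(2) n] by blast
        obtain b1 d1 where w1: "b1 \<in> B" "d1 \<in> D" "\<theta> e = \<pi> b1 \<otimes>\<^bsub>Q\<^esub> \<pi> d1" using decP[of "\<theta> e"] e Dc by auto
        have b1P: "b1 \<in> P3" unfolding P3_def using w1 e by blast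
        have "\<theta> d = (\<theta> e) [^]\<^bsub>Q\<^esub> n" using e Dc by (simp add: TH.hom_nat_pow[symmetric])
        also have "\<dots> = \<pi> (b1 [^]\<^bsub>G\<^esub> n) \<otimes>\<^bsub>Q\<^esub> \<pi> (d1 [^]\<^bsub>G\<^esub> n)"
          using w1 Bc Dc by (simp add: Q.nat_pow_distrib PI.hom_nat_pow)
        finally have "b = b1 [^]\<^bsub>G\<^esub> n" using uniq2[of b "b1 [^]\<^bsub>G\<^esub> n" d' "d1 [^]\<^bsub>G\<^esub> n"] w w1 Bpow Dpow by metis
        then show "\<exists>y\<in>P3. y [^]\<^bsub>G\<^esub> n = b" using b1P by blast
      next
        fix b assume b: "b \<in> P3"
        then obtain d d' where w: "b \<in> B" "d \<in> D" "d' \<in> D" "\<theta> d = \<pi> b \<otimes>\<^bsub>Q\<^esub> \<pi> d'" by (auto simp: P3_def)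
        obtain n where n: "n > 0" "d [^]\<^bsub>G\<^esub> (n::nat) = \<one>\<^bsub>G\<^esub>" using Dtor[OF w(2)] by blast
        have "\<pi> (b [^]\<^bsub>G\<^esub> n) \<otimes>\<^bsub>Q\<^esub> \<pi> (d' [^]\<^bsub>G\<^esub> n) = (\<theta> d) [^]\<^bsub>Q\<^esub> n"
          using w Bc Dc by (simp add: Q.nat_pow_distrib PI.hom_nat_pow)
        also have "\<dots> = \<pi> \<one>\<^bsub>G\<^esub> \<otimes>\<^bsub>Q\<^esub> \<pi> \<one>\<^bsub>G\<^esub>" using n(2) w(2) Dc by (simp add: TH.hom_nat_pow[symmetric])
        finally have "b [^]\<^bsub>G\<^esub> n = \<one>\<^bsub>G\<^esub>" using uniq2[of "b [^]\<^bsub>G\<^esub> n" "\<one>\<^bsub>G\<^esub>" "d' [^]\<^bsub>G\<^esub> n" "\<one>\<^bsub>G\<^esub>"] w B1 D1 Bpow Dpow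
          by metis
        then show "\<exists>n>0. b [^]\<^bsub>G\<^esub> (n::nat) = \<one>\<^bsub>G\<^esub>" using n by blast
      qed
      have TDPD: "\<theta> d \<in> \<pi> ` D" if d: "d \<in> D" for d
      proof -
        obtain b d' where w: "b \<in> B" "d' \<in> D" "\<theta> d = \<pi> b \<otimes>\<^bsub>Q\<^esub> \<pi> d'" using decP[of "\<theta> d"] d Dc by auto
        have "b \<in> P3" unfolding P3_def using w d by blast
        then have "b = \<one>\<^bsub>G\<^esub>" using P3triv by blast
        then have "\<theta> d = \<pi> d'" using w Dc by simp
        then show ?thesis using w by blast
      qed
      have sPD: "subgroup (\<pi> ` D) Q" using PI.subgroup_img_is_subgroup[OF sD] .
      obtain c where c: "c \<in> C" "c \<noteq> \<one>\<^bsub>Q\<^esub>" using Cne C1 by blast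
      obtain d0 where d0: "d0 \<in> D" "c = \<pi> d0" using c CPD by blast
      obtain m where m: "m > 0" "d0 [^]\<^bsub>G\<^esub> (m::nat) = \<one>\<^bsub>G\<^esub>" using Dtor[OF d0(1)] by blast
      have "c [^]\<^bsub>Q\<^esub> m = \<one>\<^bsub>Q\<^esub>" using d0 m Dc by (simp add: PI.hom_nat_pow[symmetric])
      then obtain p k where pk: "Factorial_Ring.prime (p::nat)" "c [^]\<^bsub>Q\<^esub> (k::nat) \<noteq> \<one>\<^bsub>Q\<^esub>" "(c [^]\<^bsub>Q\<^esub> k) [^]\<^bsub>Q\<^esub> p = \<one>\<^bsub>Q\<^esub>"
        using Q.prime_order_elem[of c m] c Cc m(1) by blast
      define c1 where "c1 = c [^]\<^bsub>Q\<^esub> k"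
      have c1C: "c1 \<in> C" using Cpow c by (simp add: c1_def)
      have c1c: "c1 \<in> carrier Q" using c1C Cc by blast
      have c1PD: "c1 \<in> \<pi> ` D" using c1C CPD by blast
      have c1n: "c1 \<noteq> \<one>\<^bsub>Q\<^esub>" and c1p: "c1 [^]\<^bsub>Q\<^esub> p = \<one>\<^bsub>Q\<^esub>" using pk by (simp_all add: c1_def)
      define Dp where "Dp = {x\<in>D. x [^]\<^bsub>G\<^esub> p = \<one>\<^bsub>G\<^esub>}"
      define PDp where "PDp = {y\<in>\<pi> ` D. y [^]\<^bsub>Q\<^esub> p = \<one>\<^bsub>Q\<^esub>}"
      have fDp: "finite Dp" unfolding Dp_def using Dsoc[OF pk(1)] .
      have bound: "finite PDp \<and> card PDp \<le> card Dp"
        unfolding PDp_def Dp_def using socle_image_bound[OF G Q pi sD Dtor fDp[unfolded Dp_def]] .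
      define S1 where "S1 = \<theta> ` Dp"
      define S2 where "S2 = (\<lambda>y. y \<otimes>\<^bsub>Q\<^esub> c1) ` S1"
      have DpD: "\<And>x. x \<in> Dp \<Longrightarrow> x \<in> D" by (simp add: Dp_def)
      have S1sub: "S1 \<subseteq> PDp"
      proof
        fix y assume "y \<in> S1"
        then obtain x where x: "x \<in> Dp" "y = \<theta> x" by (auto simp: S1_def)
        have "y [^]\<^bsub>Q\<^esub> p = \<theta> (x [^]\<^bsub>G\<^esub> p)" using x Dc DpD by (simp add: TH.hom_nat_pow)
        also have "\<dots> = \<one>\<^bsub>Q\<^esub>" using x by (simp add: Dp_def)
        finally show "y \<in> PDp" using TDPD DpD x by (simp add: PDp_def)
      qed
      have S2sub: "S2 \<subseteq> PDp"
      proof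
        fix y assume "y \<in> S2"
        then obtain x where x: "x \<in> Dp" "y = \<theta> x \<otimes>\<^bsub>Q\<^esub> c1" by (auto simp: S2_def S1_def)
        have "y [^]\<^bsub>Q\<^esub> p = \<theta> (x [^]\<^bsub>G\<^esub> p) \<otimes>\<^bsub>Q\<^esub> c1 [^]\<^bsub>Q\<^esub> p" using x Dc DpD c1c by (simp add: TH.hom_nat_pow Q.nat_pow_distrib)
        also have "\<dots> = \<one>\<^bsub>Q\<^esub>" using x c1p by (simp add: Dp_def)
        finally have "y [^]\<^bsub>Q\<^esub> p = \<one>\<^bsub>Q\<^esub>" .
        moreover have "y \<in> \<pi> ` D" using x TDPD DpD c1PD sPD subgroup.m_closed by metis
        ultimately show "y \<in> PDp" by (simp add: PDp_def)
      qed
      have disj: "S1 \<inter> S2 = {}"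
      proof (rule ccontr)
        assume "S1 \<inter> S2 \<noteq> {}"
        then obtain x x' where x: "x \<in> Dp" "x' \<in> Dp" "\<theta> x = \<theta> x' \<otimes>\<^bsub>Q\<^esub> c1" by (auto simp: S1_def S2_def)
        have "\<theta> x \<otimes>\<^bsub>Q\<^esub> \<one>\<^bsub>Q\<^esub> = \<theta> x' \<otimes>\<^bsub>Q\<^esub> c1" using x DpD Dc c1c by simp
        moreover have "\<theta> x \<in> A" "\<theta> x' \<in> A" unfolding A_def using x(1,2) DpD Dc by auto
        ultimately have "\<one>\<^bsub>Q\<^esub> = c1" using Q.dec_unique[OF sA sC ACi[folded A_def] _ C1 _ c1C] by blast
        then show False using c1n by simp
      qed
      have cS1: "card S1 = card Dp" unfolding S1_def
        by (rule card_image) (use thi DpD Dc in \<open>auto intro: inj_on_subset\<close>)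
      have cS2: "card S2 = card S1" unfolding S2_def
      proof (rule card_image, rule inj_onI)
        fix y z assume "y \<in> S1" "z \<in> S1" "y \<otimes>\<^bsub>Q\<^esub> c1 = z \<otimes>\<^bsub>Q\<^esub> c1"
        moreover have "S1 \<subseteq> carrier Q" using DpD Dc by (auto simp: S1_def)
        ultimately show "y = z" using c1c Q.r_cancel by blast
      qed
      have fS1: "finite S1" using fDp by (simp add: S1_def)
      have fS2: "finite S2" using fS1 by (simp add: S2_def)
      have "card (S1 \<union> S2) = card S1 + card S2" using card_Un_disjoint[OF fS1 fS2 disj] .
      moreover have "card (S1 \<union> S2) \<le> card PDp" using bound S1sub S2sub by (intro card_mono) auto
      moreover have "card Dp > 0" using fDp D1 by (auto simp: Dp_def card_gt_0_iff)
      ultimately show False using bound cS1 cS2 by linarith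
    qed
  qed
qed

lemma D_transfer:
  assumes G: "comm_group G" and sD: "subgroup D G" and phi: "\<phi> \<in> iso (G\<lparr>carrier := D\<rparr>) (quasicyclic_sum n)"
  shows "\<And>x. x \<in> D \<Longrightarrow> \<exists>m>0. x [^]\<^bsub>G\<^esub> (m::nat) = \<one>\<^bsub>G\<^esub>"
    and "\<And>x m. x \<in> D \<Longrightarrow> (m::nat) > 0 \<Longrightarrow> \<exists>y\<in>D. y [^]\<^bsub>G\<^esub> m = x"
    and "\<And>p. Factorial_Ring.prime (p::nat) \<Longrightarrow> finite {x\<in>D. x [^]\<^bsub>G\<^esub> p = \<one>\<^bsub>G\<^esub>}"
proof -
  interpret G: comm_group G by fact
  have gD: "group (G\<lparr>carrier := D\<rparr>)" using subgroup.subgroup_is_group[OF sD G.is_group] .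
  have gQ: "group (quasicyclic_sum n)" by (rule qs_group)
  have hom: "\<phi> \<in> hom (G\<lparr>carrier := D\<rparr>) (quasicyclic_sum n)" and bij: "bij_betw \<phi> D (carrier (quasicyclic_sum n))"
    using phi by (auto simp: iso_def)
  have inj: "inj_on \<phi> D" and surj: "\<phi> ` D = carrier (quasicyclic_sum n)"
    using bij by (auto simp: bij_betw_def)
  have Dpow: "\<And>x m. x \<in> D \<Longrightarrow> x [^]\<^bsub>G\<^esub> (m::nat) \<in> D"
    using G.subgroup_int_pow_closed[OF sD] by (metis int_pow_int)
  have powc: "\<phi> (x [^]\<^bsub>G\<^esub> (m::nat)) = (\<phi> x) [^]\<^bsub>quasicyclic_sum n\<^esub> m" if "x \<in> D" for x m
  proof -
    have "\<phi> (x [^]\<^bsub>G\<lparr>carrier := D\<rparr>\<^esub> m) = (\<phi> x) [^]\<^bsub>quasicyclic_sum n\<^esub> m"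
      using hom_nat_pow[OF hom _ gD gQ] that by simp
    then show ?thesis using G.nat_pow_consistent by metis
  qed
  have one: "\<phi> \<one>\<^bsub>G\<^esub> = \<one>\<^bsub>quasicyclic_sum n\<^esub>" using hom_one[OF hom gD gQ] by simp
  have D1: "\<one>\<^bsub>G\<^esub> \<in> D" using sD subgroup.one_closed by blast
  have phic: "\<phi> x \<in> carrier (quasicyclic_sum n)" if "x \<in> D" for x using surj that by blast
  show "\<exists>m>0. x [^]\<^bsub>G\<^esub> (m::nat) = \<one>\<^bsub>G\<^esub>" if x: "x \<in> D" for x
  proof -
    obtain m where m: "m > 0" "(\<phi> x) [^]\<^bsub>quasicyclic_sum n\<^esub> (m::nat) = \<one>\<^bsub>quasicyclic_sum n\<^esub>"
      using qs_torsion[OF phic[OF x]] by blast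
    have "\<phi> (x [^]\<^bsub>G\<^esub> m) = \<phi> \<one>\<^bsub>G\<^esub>" using m powc[OF x] one by simp
    then have "x [^]\<^bsub>G\<^esub> m = \<one>\<^bsub>G\<^esub>" using inj_onD[OF inj] Dpow[OF x] D1 by blast
    then show ?thesis using m by blast
  qed
  show "\<exists>y\<in>D. y [^]\<^bsub>G\<^esub> m = x" if x: "x \<in> D" and m: "(m::nat) > 0" for x m
  proof -
    obtain y where y: "y \<in> carrier (quasicyclic_sum n)" "y [^]\<^bsub>quasicyclic_sum n\<^esub> m = \<phi> x"
      using qs_divisible[OF phic[OF x] m] by blast
    then obtain z where z: "z \<in> D" "y = \<phi> z" using surj by blast
    have "\<phi> (z [^]\<^bsub>G\<^esub> m) = \<phi> x" using powc[OF z(1)] y z by simp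
    then have "z [^]\<^bsub>G\<^esub> m = x" using inj_onD[OF inj] Dpow[OF z(1)] x by blast
    then show ?thesis using z by blast
  qed
  show "finite {x\<in>D. x [^]\<^bsub>G\<^esub> p = \<one>\<^bsub>G\<^esub>}" if p: "Factorial_Ring.prime (p::nat)" for p
  proof -
    let ?S = "{x\<in>D. x [^]\<^bsub>G\<^esub> p = \<one>\<^bsub>G\<^esub>}"
    have "\<phi> ` ?S \<subseteq> {y \<in> carrier (quasicyclic_sum n). y [^]\<^bsub>quasicyclic_sum n\<^esub> p = \<one>\<^bsub>quasicyclic_sum n\<^esub>}"
    proof
      fix y assume "y \<in> \<phi> ` ?S"
      then obtain x where x: "x \<in> D" "x [^]\<^bsub>G\<^esub> p = \<one>\<^bsub>G\<^esub>" "y = \<phi> x" by blast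
      have "y [^]\<^bsub>quasicyclic_sum n\<^esub> p = \<phi> (x [^]\<^bsub>G\<^esub> p)" using powc[OF x(1)] x(3) by simp
      then show "y \<in> {y \<in> carrier (quasicyclic_sum n). y [^]\<^bsub>quasicyclic_sum n\<^esub> p = \<one>\<^bsub>quasicyclic_sum n\<^esub>}"
        using x one phic by simp
    qed
    then have "finite (\<phi> ` ?S)" using qs_socle[OF p] finite_subset by blast
    moreover have "inj_on \<phi> ?S" using inj by (rule inj_on_subset) auto
    ultimately show ?thesis using finite_imageD by blast
  qed
qed

theorem proposition4p1:
  fixes G :: "('a, 'b) monoid_scheme"
  assumes "comm_group G" and "Extended_Bassian G"
  shows "relatively_Hopfian G"
proof -
  interpret G: comm_group G by fact
  obtain B D n where sB: "subgroup B G" and sD: "subgroup D G" and BD: "B <#>\<^bsub>G\<^esub> D = carrier G"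
    and BDi: "B \<inter> D = {\<one>\<^bsub>G\<^esub>}" and Bas: "Bassian (G\<lparr>carrier := B\<rparr>)"
    and isoD: "G\<lparr>carrier := D\<rparr> \<cong> quasicyclic_sum n"
    using assms(2) unfolding Extended_Bassian_def by (elim exE conjE) (rule that)
  obtain \<phi> where phi: "\<phi> \<in> iso (G\<lparr>carrier := D\<rparr>) (quasicyclic_sum n)" using isoD by (auto simp: is_iso_def)
  note DT = D_transfer[OF assms(1) sD phi]
  show ?thesis unfolding relatively_Hopfian_def
  proof
    assume "\<exists>H. subgroup H G \<and> H \<noteq> {\<one>\<^bsub>G\<^esub>} \<and>
      (\<exists>A C. subgroup A (G Mod H) \<and> subgroup C (G Mod H) \<and>
         A <#>\<^bsub>G Mod H\<^esub> C = carrier (G Mod H) \<and> A \<inter> C = {\<one>\<^bsub>G Mod H\<^esub>} \<and>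
         C \<noteq> {\<one>\<^bsub>G Mod H\<^esub>} \<and> (G Mod H)\<lparr>carrier := A\<rparr> \<cong> G)"
    then obtain H A C where sH: "subgroup H G" and sA: "subgroup A (G Mod H)" and sC: "subgroup C (G Mod H)"
      and AC: "A <#>\<^bsub>G Mod H\<^esub> C = carrier (G Mod H)" and ACi: "A \<inter> C = {\<one>\<^bsub>G Mod H\<^esub>}"
      and Cne: "C \<noteq> {\<one>\<^bsub>G Mod H\<^esub>}" and isoA: "(G Mod H)\<lparr>carrier := A\<rparr> \<cong> G" by (elim exE conjE) (rule that)
    have Q: "comm_group (G Mod H)" using G.abelian_FactGroup[OF sH] .
    interpret Q: comm_group "G Mod H" by fact
    have pi: "(\<lambda>a. H #>\<^bsub>G\<^esub> a) \<in> hom G (G Mod H)"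
      using normal.r_coset_hom_Mod[OF G.subgroup_imp_normal[OF sH]] .
    have pis: "(\<lambda>a. H #>\<^bsub>G\<^esub> a) ` carrier G = carrier (G Mod H)"
      by (auto simp: FactGroup_def RCOSETS_def)
    obtain \<psi> where psi: "\<psi> \<in> iso ((G Mod H)\<lparr>carrier := A\<rparr>) G" using isoA by (auto simp: is_iso_def)
    have gA: "group ((G Mod H)\<lparr>carrier := A\<rparr>)" using subgroup.subgroup_is_group[OF sA Q.is_group] .
    define \<theta> where "\<theta> = inv_into A \<psi>"
    have thiso: "\<theta> \<in> iso G ((G Mod H)\<lparr>carrier := A\<rparr>)"
      using group.iso_set_sym[OF gA psi] by (simp add: \<theta>_def)
    have thhom: "\<theta> \<in> hom G ((G Mod H)\<lparr>carrier := A\<rparr>)" and thbij: "bij_betw \<theta> (carrier G) A"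
      using thiso by (auto simp: iso_def)
    have Ac: "A \<subseteq> carrier (G Mod H)" using sA subgroup.subset by blast
    have th: "\<theta> \<in> hom G (G Mod H)"
    proof (rule homI)
      fix x assume "x \<in> carrier G"
      then show "\<theta> x \<in> carrier (G Mod H)" using thhom Ac by (auto simp: hom_def)
    next
      fix x y assume "x \<in> carrier G" "y \<in> carrier G"
      then show "\<theta> (x \<otimes>\<^bsub>G\<^esub> y) = \<theta> x \<otimes>\<^bsub>G Mod H\<^esub> \<theta> y" using thhom by (simp add: hom_def)
    qed
    have thi: "inj_on \<theta> (carrier G)" and thimg: "\<theta> ` carrier G = A"
      using thbij by (auto simp: bij_betw_def)
    have AC': "\<theta> ` carrier G <#>\<^bsub>G Mod H\<^esub> C = carrier (G Mod H)" using AC thimg by simp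
    have ACi': "\<theta> ` carrier G \<inter> C = {\<one>\<^bsub>G Mod H\<^esub>}" using ACi thimg by simp
    show False
      by (rule core[OF assms(1) Q sB sD BD BDi Bas DT(1) DT(2) DT(3) pi pis th thi sC AC' ACi' Cne])
  qed
qed


end
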